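(* For any group $B$ and any positive integer $k$, the composition $$H_2(B_k;\mathbb Z)\xrightarrow{i_*}H_2(B;\mathbb Z)\xrightarrow{\pi_*}H_2(B/B_{2k-1};\mathbb Z)$$ is the zero map, where $i$ is the inclusion and $\pi$ the quotient map.
   Context: $B_k$ denotes the $k$-th term of the lower central series: $B_1=B$, $B_{k+1}=[B,B_k]$. *)

theory Defs
  imports "HOL-Algebra.Algebra"
begin

text \<open>B_1 = B, B_(k+1) = [B, B_k], the subgroup generated by commutators [b,x] with
  b in B and x in B_k. The index 0 is given the value carrier G as well (irrelevant).\<close>

fun lower_central :: "('a, 'b) monoid_scheme \<Rightarrow> nat \<Rightarrow> 'a set" where
  "lower_central G 0 = carrier G"
| "lower_central G (Suc 0) = carrier G"
| "lower_central G (Suc (Suc k)) =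
     generate G { b \<otimes>\<^bsub>G\<^esub> x \<otimes>\<^bsub>G\<^esub> inv\<^bsub>G\<^esub> b \<otimes>\<^bsub>G\<^esub> inv\<^bsub>G\<^esub> x
                 | b x. b \<in> carrier G \<and> x \<in> lower_central G (Suc k) }"

text \<open>C_n(G;Z) is the free abelian group on n-tuples of elements of G; chains are
  finitely supported integer-valued functions on G^n.
  H_2(G;Z) = ker d2 / im d3.\<close>

definition chain2 :: "('a, 'b) monoid_scheme \<Rightarrow> ('a \<times> 'a \<Rightarrow> int) \<Rightarrow> bool" where
  "chain2 G c \<longleftrightarrow> finite {p. c p \<noteq> 0} \<and> (\<forall>p. c p \<noteq> 0 \<longrightarrow> p \<in> carrier G \<times> carrier G)"

definition chain3 :: "('a, 'b) monoid_scheme \<Rightarrow> ('a \<times> 'a \<times> 'a \<Rightarrow> int) \<Rightarrow> bool" where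
  "chain3 G c \<longleftrightarrow> finite {p. c p \<noteq> 0} \<and>
     (\<forall>p. c p \<noteq> 0 \<longrightarrow> p \<in> carrier G \<times> carrier G \<times> carrier G)"

definition bar_d2 :: "('a, 'b) monoid_scheme \<Rightarrow> ('a \<times> 'a \<Rightarrow> int) \<Rightarrow> 'a \<Rightarrow> int" where
  "bar_d2 G c x = (\<Sum>(g, h) \<in> {p. c p \<noteq> 0}.
      c (g, h) * (of_bool (x = h) - of_bool (x = g \<otimes>\<^bsub>G\<^esub> h) + of_bool (x = g)))"

definition bar_d3 :: "('a, 'b) monoid_scheme \<Rightarrow> ('a \<times> 'a \<times> 'a \<Rightarrow> int) \<Rightarrow> 'a \<times> 'a \<Rightarrow> int" where
  "bar_d3 G c y = (\<Sum>(g, h, k) \<in> {p. c p \<noteq> 0}.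
      c (g, h, k) * (of_bool (y = (h, k)) - of_bool (y = (g \<otimes>\<^bsub>G\<^esub> h, k))
                     + of_bool (y = (g, h \<otimes>\<^bsub>G\<^esub> k)) - of_bool (y = (g, h))))"

definition cycle2 :: "('a, 'b) monoid_scheme \<Rightarrow> ('a \<times> 'a \<Rightarrow> int) \<Rightarrow> bool" where
  "cycle2 G z \<longleftrightarrow> chain2 G z \<and> (\<forall>x. bar_d2 G z x = 0)"

definition boundary2 :: "('a, 'b) monoid_scheme \<Rightarrow> ('a \<times> 'a \<Rightarrow> int) \<Rightarrow> bool" where
  "boundary2 G z \<longleftrightarrow> (\<exists>c. chain3 G c \<and> (\<forall>p. bar_d3 G c p = z p))"

definition push2 :: "('a \<Rightarrow> 'c) \<Rightarrow> ('a \<times> 'a \<Rightarrow> int) \<Rightarrow> 'c \<times> 'c \<Rightarrow> int" where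
  "push2 f c p = (\<Sum>q \<in> {q. c q \<noteq> 0 \<and> (f (fst q), f (snd q)) = p}. c q)"

text \<open>The induced map on H_2 is zero iff every 2-cycle is mapped to a 2-boundary.\<close>

definition H2_map_zero ::
  "('a, 'b) monoid_scheme \<Rightarrow> ('c, 'd) monoid_scheme \<Rightarrow> ('a \<Rightarrow> 'c) \<Rightarrow> bool" where
  "H2_map_zero G H f \<longleftrightarrow> (\<forall>z. cycle2 G z \<longrightarrow> boundary2 H (push2 f z))"

end

theory Submission
  imports Defs
begin


definition cmt :: "('a,'b) monoid_scheme \<Rightarrow> 'a \<Rightarrow> 'a \<Rightarrow> 'a" where
  "cmt G x y = x \<otimes>\<^bsub>G\<^esub> y \<otimes>\<^bsub>G\<^esub> inv\<^bsub>G\<^esub> x \<otimes>\<^bsub>G\<^esub> inv\<^bsub>G\<^esub> y"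

context group begin

lemma inv_cancel_l [simp]: "x \<in> carrier G \<Longrightarrow> y \<in> carrier G \<Longrightarrow> x \<otimes> (inv x \<otimes> y) = y"
  by (simp flip: m_assoc)
lemma inv_cancel_l2 [simp]: "x \<in> carrier G \<Longrightarrow> y \<in> carrier G \<Longrightarrow> inv x \<otimes> (x \<otimes> y) = y"
  by (simp flip: m_assoc)

lemma cmt_closed [simp]: "x \<in> carrier G \<Longrightarrow> y \<in> carrier G \<Longrightarrow> cmt G x y \<in> carrier G"
  by (simp add: cmt_def)

lemma cmt_inv: "x \<in> carrier G \<Longrightarrow> y \<in> carrier G \<Longrightarrow> inv (cmt G x y) = cmt G y x"
  by (simp add: cmt_def inv_mult_group m_assoc)

lemma cmt_conj: "g \<in> carrier G \<Longrightarrow> x \<in> carrier G \<Longrightarrow> y \<in> carrier G \<Longrightarrow>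
   g \<otimes> cmt G x y \<otimes> inv g = cmt G (g \<otimes> x \<otimes> inv g) (g \<otimes> y \<otimes> inv g)"
  by (simp add: cmt_def inv_mult_group m_assoc)

lemma hall_witt:
  assumes "u \<in> carrier G" "v \<in> carrier G" "w \<in> carrier G"
  shows "(v \<otimes> cmt G (cmt G (inv v) u) w \<otimes> inv v) \<otimes> (w \<otimes> cmt G (cmt G (inv w) v) u \<otimes> inv w)
     \<otimes> (u \<otimes> cmt G (cmt G (inv u) w) v \<otimes> inv u) = \<one>"
  using assms by (simp add: cmt_def inv_mult_group m_assoc)

end

context group begin
lemma cmt_inv_left: "a \<in> carrier G \<Longrightarrow> y \<in> carrier G \<Longrightarrow>
  cmt G (inv a) y = inv a \<otimes> inv (cmt G a y) \<otimes> a"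
  unfolding cmt_def by (simp add: inv_mult_group m_assoc)
lemma cmt_mult_left: "a \<in> carrier G \<Longrightarrow> b \<in> carrier G \<Longrightarrow> y \<in> carrier G \<Longrightarrow>
  cmt G (a \<otimes> b) y = (a \<otimes> cmt G b y \<otimes> inv a) \<otimes> cmt G a y"
  unfolding cmt_def by (simp add: inv_mult_group m_assoc)

lemma conj_mem: "H \<lhd> G \<Longrightarrow> g \<in> carrier G \<Longrightarrow> h \<in> H \<Longrightarrow> g \<otimes> h \<otimes> inv g \<in> H"
  by (rule normal.inv_op_closed2)

lemma W_subgroup:
  assumes Tn: "T \<lhd> G" and S: "S \<subseteq> carrier G"
  shows "subgroup {w \<in> carrier G. \<forall>y\<in>S. cmt G w y \<in> T} G" (is "subgroup ?W G")
proof (rule subgroupI)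
  have Ts: "subgroup T G" using Tn normal_imp_subgroup by blast
  show "?W \<subseteq> carrier G" by blast
  have "\<one> \<in> ?W"
  proof (intro CollectI conjI ballI)
    fix y assume "y \<in> S"
    then have "y \<in> carrier G" using S by blast
    then have "cmt G \<one> y = \<one>" by (simp add: cmt_def)
    then show "cmt G \<one> y \<in> T" using subgroup.one_closed[OF Ts] by simp
  qed simp
  then show "?W \<noteq> {}" by blast
next
  have Ts: "subgroup T G" using Tn normal_imp_subgroup by blast
  fix a assume a: "a \<in> ?W"
  have ac: "a \<in> carrier G" using a by blast
  show "inv a \<in> ?W"
  proof (intro CollectI conjI ballI)
    show "inv a \<in> carrier G" using ac by simp
    fix y assume y: "y \<in> S"
    have ay: "cmt G a y \<in> T" using a y by blast
    have yc: "y \<in> carrier G" using y S by blast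
    have "inv (cmt G a y) \<in> T" using subgroup.m_inv_closed[OF Ts ay] .
    then have "inv a \<otimes> inv (cmt G a y) \<otimes> inv (inv a) \<in> T" using conj_mem[OF Tn, of "inv a"] ac by simp
    then show "cmt G (inv a) y \<in> T" using cmt_inv_left[OF ac yc] ac by simp
  qed
next
  have Ts: "subgroup T G" using Tn normal_imp_subgroup by blast
  fix a b assume a: "a \<in> ?W" and b: "b \<in> ?W"
  have ac: "a \<in> carrier G" using a by blast
  have bc: "b \<in> carrier G" using b by blast
  show "a \<otimes> b \<in> ?W"
  proof (intro CollectI conjI ballI)
    show "a \<otimes> b \<in> carrier G" using ac bc by simp
    fix y assume y: "y \<in> S"
    have ay: "cmt G a y \<in> T" using a y by blast
    have by': "cmt G b y \<in> T" using b y by blast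
    have yc: "y \<in> carrier G" using y S by blast
    have c1: "a \<otimes> cmt G b y \<otimes> inv a \<in> T" using conj_mem[OF Tn ac by'] .
    have "(a \<otimes> cmt G b y \<otimes> inv a) \<otimes> cmt G a y \<in> T" using subgroup.m_closed[OF Ts c1 ay] .
    then show "cmt G (a \<otimes> b) y \<in> T" using cmt_mult_left[OF ac bc yc] by simp
  qed
qed

end


context group begin

lemma lc_Suc: "0 < j \<Longrightarrow> lower_central G (Suc j) =
   generate G {cmt G b x |b x. b \<in> carrier G \<and> x \<in> lower_central G j}"
  by (cases j) (auto simp: cmt_def)

lemma lc_normal: "lower_central G j \<lhd> G"
proof (induction j)
  case 0 then show ?case using normal_self by simp
next
  case (Suc j)
  show ?case
  proof (cases "j = 0")
    case True then show ?thesis using normal_self by simp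
  next
    case False
    interpret N: normal "lower_central G j" G by (rule Suc)
    have sub: "lower_central G j \<subseteq> carrier G" using N.subset .
    have eq: "lower_central G (Suc j) = generate G {cmt G b x |b x. b \<in> carrier G \<and> x \<in> lower_central G j}"
      using lc_Suc False by simp
    show ?thesis unfolding eq
    proof (rule normal_generateI)
      show "{cmt G b x |b x. b \<in> carrier G \<and> x \<in> lower_central G j} \<subseteq> carrier G"
        using sub by auto
    next
      fix h g assume h: "h \<in> {cmt G b x |b x. b \<in> carrier G \<and> x \<in> lower_central G j}"
        and g: "g \<in> carrier G"
      then obtain b x where hb: "h = cmt G b x" "b \<in> carrier G" "x \<in> lower_central G j" by blast
      have e: "g \<otimes> h \<otimes> inv g = cmt G (g \<otimes> b \<otimes> inv g) (g \<otimes> x \<otimes> inv g)"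
        using hb g sub by (simp add: cmt_conj)
      have x': "g \<otimes> x \<otimes> inv g \<in> lower_central G j" using N.inv_op_closed2[OF g hb(3)] .
      have b': "g \<otimes> b \<otimes> inv g \<in> carrier G" using g hb by simp
      show "g \<otimes> h \<otimes> inv g \<in> {cmt G b x |b x. b \<in> carrier G \<and> x \<in> lower_central G j}"
        unfolding e by (intro CollectI exI[of _ "g \<otimes> b \<otimes> inv g"] exI[of _ "g \<otimes> x \<otimes> inv g"] conjI refl b' x')
    qed
  qed
qed

lemma lc_subgroup: "subgroup (lower_central G j) G"
  using lc_normal by (rule normal_imp_subgroup)

lemma lc_sub: "lower_central G j \<subseteq> carrier G"
  using lc_subgroup by (rule subgroup.subset)

lemma lc_mem: "x \<in> lower_central G j \<Longrightarrow> x \<in> carrier G"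
  using lc_sub by blast

lemma lc_gen: "0 < j \<Longrightarrow> b \<in> carrier G \<Longrightarrow> x \<in> lower_central G j \<Longrightarrow>
  cmt G b x \<in> lower_central G (Suc j)"
  unfolding lc_Suc by (rule generate.incl) blast

lemma lc_gen': "0 < j \<Longrightarrow> b \<in> carrier G \<Longrightarrow> x \<in> lower_central G j \<Longrightarrow>
  cmt G x b \<in> lower_central G (Suc j)"
proof -
  assume a: "0 < j" "b \<in> carrier G" "x \<in> lower_central G j"
  have "inv (cmt G b x) \<in> lower_central G (Suc j)"
    using subgroup.m_inv_closed[OF lc_subgroup lc_gen[OF a]] .
  then show ?thesis using a lc_mem by (simp add: cmt_inv)
qed


lemma lc_bracket:
  "0 < i \<Longrightarrow> 0 < j \<Longrightarrow> x \<in> lower_central G i \<Longrightarrow> y \<in> lower_central G j \<Longrightarrow>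
   cmt G x y \<in> lower_central G (i + j)"
proof (induction i arbitrary: j x y)
  case 0 then show ?case by simp
next
  case (Suc i)
  show ?case
  proof (cases "i = 0")
    case True then show ?thesis using Suc.prems lc_gen by simp
  next
    case False
    define T where "T = lower_central G (Suc i + j)"
    have Tn: "T \<lhd> G" unfolding T_def by (rule lc_normal)
    have Ts: "subgroup T G" using Tn by (rule normal_imp_subgroup)
    define W where "W = {w \<in> carrier G. \<forall>y \<in> lower_central G j. cmt G w y \<in> T}"
    have W: "subgroup W G" unfolding W_def by (rule W_subgroup[OF Tn lc_sub])
    have gens: "{cmt G g u |g u. g \<in> carrier G \<and> u \<in> lower_central G i} \<subseteq> W"
    proof safe
      fix g u assume g: "g \<in> carrier G" and u: "u \<in> lower_central G i"
      have uc: "u \<in> carrier G" using u lc_mem by blast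
      show "cmt G g u \<in> W" unfolding W_def
      proof safe
        show "cmt G g u \<in> carrier G" using g uc by simp
        fix y assume y: "y \<in> lower_central G j"
        have yc: "y \<in> carrier G" using y lc_mem by blast
        have i0: "0 < i" using False by simp
        have j0: "0 < j" using Suc.prems by simp
        have c2: "cmt G (inv g) (inv y) \<in> lower_central G (Suc j)"
          using lc_gen[OF j0 inv_closed[OF g] subgroup.m_inv_closed[OF lc_subgroup y]] .
        have c2': "cmt G (inv y) (inv g) \<in> lower_central G (Suc j)"
          using subgroup.m_inv_closed[OF lc_subgroup c2] cmt_inv[of "inv g" "inv y"] g yc by simp
        have "cmt G u (cmt G (inv y) (inv g)) \<in> lower_central G (i + Suc j)"
          using Suc.IH[OF i0 _ u c2'] by simp
        then have "cmt G u (cmt G (inv y) (inv g)) \<in> T" unfolding T_def by simp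
        then have "inv (cmt G u (cmt G (inv y) (inv g))) \<in> T"
          by (rule subgroup.m_inv_closed[OF Ts])
        then have t2': "cmt G (cmt G (inv y) (inv g)) u \<in> T"
          using cmt_inv[of u "cmt G (inv y) (inv g)"] uc g yc by simp
        have t2: "y \<otimes> cmt G (cmt G (inv y) (inv g)) u \<otimes> inv y \<in> T"
          using conj_mem[OF Tn yc t2'] .
        have c3: "cmt G (inv u) y \<in> lower_central G (i + j)"
          using Suc.IH[OF i0 j0 subgroup.m_inv_closed[OF lc_subgroup u] y] .
        have "cmt G (inv g) (cmt G (inv u) y) \<in> T"
          using lc_gen[OF _ _ c3] i0 g unfolding T_def by simp
        then have "inv (cmt G (inv g) (cmt G (inv u) y)) \<in> T"
          by (rule subgroup.m_inv_closed[OF Ts])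
        then have t3': "cmt G (cmt G (inv u) y) (inv g) \<in> T"
          using cmt_inv[of "inv g" "cmt G (inv u) y"] uc g yc by simp
        have t3: "u \<otimes> cmt G (cmt G (inv u) y) (inv g) \<otimes> inv u \<in> T"
          using conj_mem[OF Tn uc t3'] .
        have hw: "(inv g \<otimes> cmt G (cmt G g u) y \<otimes> g) \<otimes>
            ((y \<otimes> cmt G (cmt G (inv y) (inv g)) u \<otimes> inv y) \<otimes> (u \<otimes> cmt G (cmt G (inv u) y) (inv g) \<otimes> inv u)) = \<one>"
          using hall_witt[of u "inv g" y] g uc yc by (simp add: m_assoc)
        define t1 where "t1 = inv g \<otimes> cmt G (cmt G g u) y \<otimes> g"
        define s where "s = (y \<otimes> cmt G (cmt G (inv y) (inv g)) u \<otimes> inv y) \<otimes> (u \<otimes> cmt G (cmt G (inv u) y) (inv g) \<otimes> inv u)"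
        have sT: "s \<in> T" unfolding s_def using subgroup.m_closed[OF Ts t2 t3] .
        have sc: "s \<in> carrier G" using subgroup.subset[OF Ts] sT by blast
        have t1c: "t1 \<in> carrier G" unfolding t1_def using g uc yc by simp
        have "t1 \<otimes> s = \<one>" using hw unfolding t1_def s_def .
        then have "inv s = t1" using inv_equality[OF _ sc t1c] by blast
        then have t1T: "t1 \<in> T" using subgroup.m_inv_closed[OF Ts sT] by simp
        have "cmt G (cmt G g u) y = g \<otimes> t1 \<otimes> inv g"
          unfolding t1_def using g uc yc by (simp add: m_assoc)
        then show "cmt G (cmt G g u) y \<in> T" using conj_mem[OF Tn g t1T] by simp
      qed
    qed
    have "lower_central G (Suc i) \<subseteq> W"
    proof -
      have eq: "lower_central G (Suc i) = generate G {cmt G b x |b x. b \<in> carrier G \<and> x \<in> lower_central G i}"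
        using lc_Suc False by simp
      show ?thesis unfolding eq by (rule generate_subgroup_incl[OF gens W])
    qed
    then show ?thesis using Suc.prems unfolding W_def T_def by blast
  qed
qed

end


definition ext :: "('m,'c) monoid_scheme \<Rightarrow> ('q,'d) monoid_scheme \<Rightarrow> ('q \<Rightarrow> 'q \<Rightarrow> 'm) \<Rightarrow> ('m \<times> 'q) monoid" where
  "ext M Q w = \<lparr>carrier = carrier M \<times> carrier Q,
     monoid.mult = (\<lambda>x y. (fst x \<otimes>\<^bsub>M\<^esub> fst y \<otimes>\<^bsub>M\<^esub> w (snd x) (snd y), snd x \<otimes>\<^bsub>Q\<^esub> snd y)),
     one = (\<one>\<^bsub>M\<^esub>, \<one>\<^bsub>Q\<^esub>)\<rparr>"

lemma ext_carrier [simp]: "carrier (ext M Q w) = carrier M \<times> carrier Q"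
  by (simp add: ext_def)
lemma ext_mult [simp]: "(m, q) \<otimes>\<^bsub>ext M Q w\<^esub> (m', q') = (m \<otimes>\<^bsub>M\<^esub> m' \<otimes>\<^bsub>M\<^esub> w q q', q \<otimes>\<^bsub>Q\<^esub> q')"
  by (simp add: ext_def)
lemma ext_one [simp]: "\<one>\<^bsub>ext M Q w\<^esub> = (\<one>\<^bsub>M\<^esub>, \<one>\<^bsub>Q\<^esub>)"
  by (simp add: ext_def)

locale cocyc = M: comm_group M + Q: group Q for M :: "('m,'c) monoid_scheme" and Q :: "('q,'d) monoid_scheme" +
  fixes w :: "'q \<Rightarrow> 'q \<Rightarrow> 'm"
  assumes w_closed [simp]: "q \<in> carrier Q \<Longrightarrow> q' \<in> carrier Q \<Longrightarrow> w q q' \<in> carrier M"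
  and w_cocycle: "q \<in> carrier Q \<Longrightarrow> q' \<in> carrier Q \<Longrightarrow> q'' \<in> carrier Q \<Longrightarrow>
     w q q' \<otimes>\<^bsub>M\<^esub> w (q \<otimes>\<^bsub>Q\<^esub> q') q'' = w q' q'' \<otimes>\<^bsub>M\<^esub> w q (q' \<otimes>\<^bsub>Q\<^esub> q'')"
  and w_l [simp]: "q \<in> carrier Q \<Longrightarrow> w \<one>\<^bsub>Q\<^esub> q = \<one>\<^bsub>M\<^esub>"
  and w_r [simp]: "q \<in> carrier Q \<Longrightarrow> w q \<one>\<^bsub>Q\<^esub> = \<one>\<^bsub>M\<^esub>"
begin

lemma ext_group: "group (ext M Q w)"
proof (rule groupI)
  fix x y assume "x \<in> carrier (ext M Q w)" "y \<in> carrier (ext M Q w)"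
  then show "x \<otimes>\<^bsub>ext M Q w\<^esub> y \<in> carrier (ext M Q w)"
    by (cases x, cases y) auto
next
  show "\<one>\<^bsub>ext M Q w\<^esub> \<in> carrier (ext M Q w)" by simp
next
  fix x y z assume "x \<in> carrier (ext M Q w)" "y \<in> carrier (ext M Q w)" "z \<in> carrier (ext M Q w)"
  then obtain m1 q1 m2 q2 m3 q3 where xyz: "x = (m1, q1)" "y = (m2, q2)" "z = (m3, q3)"
    and c: "m1 \<in> carrier M" "q1 \<in> carrier Q" "m2 \<in> carrier M" "q2 \<in> carrier Q" "m3 \<in> carrier M" "q3 \<in> carrier Q"
    by (cases x, cases y, cases z) auto
  have "m1 \<otimes>\<^bsub>M\<^esub> m2 \<otimes>\<^bsub>M\<^esub> w q1 q2 \<otimes>\<^bsub>M\<^esub> m3 \<otimes>\<^bsub>M\<^esub> w (q1 \<otimes>\<^bsub>Q\<^esub> q2) q3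
     = (m1 \<otimes>\<^bsub>M\<^esub> m2 \<otimes>\<^bsub>M\<^esub> m3) \<otimes>\<^bsub>M\<^esub> (w q1 q2 \<otimes>\<^bsub>M\<^esub> w (q1 \<otimes>\<^bsub>Q\<^esub> q2) q3)"
    using c by (simp add: M.m_ac)
  also have "\<dots> = (m1 \<otimes>\<^bsub>M\<^esub> m2 \<otimes>\<^bsub>M\<^esub> m3) \<otimes>\<^bsub>M\<^esub> (w q2 q3 \<otimes>\<^bsub>M\<^esub> w q1 (q2 \<otimes>\<^bsub>Q\<^esub> q3))"
    using c by (simp add: w_cocycle)
  also have "\<dots> = m1 \<otimes>\<^bsub>M\<^esub> (m2 \<otimes>\<^bsub>M\<^esub> m3 \<otimes>\<^bsub>M\<^esub> w q2 q3) \<otimes>\<^bsub>M\<^esub> w q1 (q2 \<otimes>\<^bsub>Q\<^esub> q3)"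
    using c by (simp add: M.m_ac)
  finally show "x \<otimes>\<^bsub>ext M Q w\<^esub> y \<otimes>\<^bsub>ext M Q w\<^esub> z = x \<otimes>\<^bsub>ext M Q w\<^esub> (y \<otimes>\<^bsub>ext M Q w\<^esub> z)"
    using xyz c by (simp add: Q.m_assoc)
next
  fix x assume "x \<in> carrier (ext M Q w)"
  then show "\<one>\<^bsub>ext M Q w\<^esub> \<otimes>\<^bsub>ext M Q w\<^esub> x = x" by (cases x) auto
next
  fix x assume "x \<in> carrier (ext M Q w)"
  then obtain m q where x: "x = (m, q)" "m \<in> carrier M" "q \<in> carrier Q" by (cases x) auto
  define y where "y = (inv\<^bsub>M\<^esub> m \<otimes>\<^bsub>M\<^esub> inv\<^bsub>M\<^esub> (w (inv\<^bsub>Q\<^esub> q) q), inv\<^bsub>Q\<^esub> q)"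
  have "y \<in> carrier (ext M Q w)" unfolding y_def using x by simp
  moreover have "y \<otimes>\<^bsub>ext M Q w\<^esub> x = \<one>\<^bsub>ext M Q w\<^esub>"
    unfolding y_def x using x by (simp add: M.m_ac)
  ultimately show "\<exists>y\<in>carrier (ext M Q w). y \<otimes>\<^bsub>ext M Q w\<^esub> x = \<one>\<^bsub>ext M Q w\<^esub>" by blast
qed

lemma ext_comm_group:
  assumes "\<And>q q'. q \<in> carrier Q \<Longrightarrow> q' \<in> carrier Q \<Longrightarrow> q \<otimes>\<^bsub>Q\<^esub> q' = q' \<otimes>\<^bsub>Q\<^esub> q"
    and "\<And>q q'. q \<in> carrier Q \<Longrightarrow> q' \<in> carrier Q \<Longrightarrow> w q q' = w q' q"
  shows "comm_group (ext M Q w)"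
proof (rule group.group_comm_groupI[OF ext_group])
  fix x y assume "x \<in> carrier (ext M Q w)" "y \<in> carrier (ext M Q w)"
  then show "x \<otimes>\<^bsub>ext M Q w\<^esub> y = y \<otimes>\<^bsub>ext M Q w\<^esub> x"
    using assms by (cases x, cases y) (auto simp: M.m_ac)
qed

end


definition dlt :: "'x \<Rightarrow> 'x \<Rightarrow> int" where "dlt p = (\<lambda>y. of_bool (y = p))"

definition CG :: "('q,'d) monoid_scheme \<Rightarrow> ('q \<times> 'q \<Rightarrow> int) monoid" where
  "CG Q = \<lparr>carrier = {c. chain2 Q c}, monoid.mult = (\<lambda>a b. \<lambda>y. a y + b y), one = (\<lambda>y. 0)\<rparr>"

definition UB :: "('q,'d) monoid_scheme \<Rightarrow> ('q \<times> 'q \<Rightarrow> int) set" where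
  "UB Q = {c. chain2 Q c \<and> boundary2 Q c}"

definition e3 :: "('q,'d) monoid_scheme \<Rightarrow> 'q \<times> 'q \<times> 'q \<Rightarrow> 'q \<times> 'q \<Rightarrow> int" where
  "e3 G t y = (of_bool (y = (fst (snd t), snd (snd t))) - of_bool (y = (fst t \<otimes>\<^bsub>G\<^esub> fst (snd t), snd (snd t)))
                     + of_bool (y = (fst t, fst (snd t) \<otimes>\<^bsub>G\<^esub> snd (snd t))) - of_bool (y = (fst t, fst (snd t))))"

lemma CG_carrier [simp]: "carrier (CG Q) = {c. chain2 Q c}" by (simp add: CG_def)
lemma CG_mult [simp]: "a \<otimes>\<^bsub>CG Q\<^esub> b = (\<lambda>y. a y + b y)" by (simp add: CG_def)
lemma CG_one [simp]: "\<one>\<^bsub>CG Q\<^esub> = (\<lambda>y. 0)" by (simp add: CG_def)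

lemma chain2_add: "chain2 Q a \<Longrightarrow> chain2 Q b \<Longrightarrow> chain2 Q (\<lambda>y. a y + b y)"
proof -
  assume A: "chain2 Q a" "chain2 Q b"
  have "{p. a p + b p \<noteq> 0} \<subseteq> {p. a p \<noteq> 0} \<union> {p. b p \<noteq> 0}" by auto
  then have f: "finite {p. a p + b p \<noteq> 0}" using A unfolding chain2_def by (meson finite_Un finite_subset)
  have "p \<in> carrier Q \<times> carrier Q" if "a p + b p \<noteq> 0" for p
  proof -
    have "a p \<noteq> 0 \<or> b p \<noteq> 0" using that by auto
    then show ?thesis using A unfolding chain2_def by blast
  qed
  then show ?thesis using f unfolding chain2_def by blast
qed

lemma chain2_neg: "chain2 Q a \<Longrightarrow> chain2 Q (\<lambda>y. - a y)"
  unfolding chain2_def by simp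

lemma chain2_zero: "chain2 Q (\<lambda>y. 0)"
  unfolding chain2_def by simp

lemma CG_comm_group: "comm_group (CG Q)"
proof (rule comm_groupI)
  fix x assume "x \<in> carrier (CG Q)"
  then show "\<exists>y\<in>carrier (CG Q). y \<otimes>\<^bsub>CG Q\<^esub> x = \<one>\<^bsub>CG Q\<^esub>"
    by (intro bexI[of _ "\<lambda>y. - x y"]) (simp_all add: chain2_neg)
next
  fix x y assume "x \<in> carrier (CG Q)" "y \<in> carrier (CG Q)"
  then show "x \<otimes>\<^bsub>CG Q\<^esub> y \<in> carrier (CG Q)" by (simp add: chain2_add)
next
  show "\<one>\<^bsub>CG Q\<^esub> \<in> carrier (CG Q)" by (simp add: chain2_zero)
next
  fix x y z :: "_ \<Rightarrow> int"
  show "x \<otimes>\<^bsub>CG Q\<^esub> y \<otimes>\<^bsub>CG Q\<^esub> z = x \<otimes>\<^bsub>CG Q\<^esub> (y \<otimes>\<^bsub>CG Q\<^esub> z)"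
    by (simp add: add.assoc)
next
  fix x y :: "_ \<Rightarrow> int"
  show "x \<otimes>\<^bsub>CG Q\<^esub> y = y \<otimes>\<^bsub>CG Q\<^esub> x"
    by (simp add: add.commute)
next
  fix x :: "_ \<Rightarrow> int"
  show "\<one>\<^bsub>CG Q\<^esub> \<otimes>\<^bsub>CG Q\<^esub> x = x" by simp
qed

lemma CG_group: "group (CG Q)"
  using CG_comm_group by (rule comm_group.axioms(2))

lemma CG_inv: "a \<in> carrier (CG Q) \<Longrightarrow> inv\<^bsub>CG Q\<^esub> a = (\<lambda>y. - a y)"
proof -
  assume a: "a \<in> carrier (CG Q)"
  have n: "(\<lambda>y. - a y) \<in> carrier (CG Q)" using a by (simp add: chain2_neg)
  have "(\<lambda>y. - a y) \<otimes>\<^bsub>CG Q\<^esub> a = \<one>\<^bsub>CG Q\<^esub>" by simp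
  then show ?thesis by (rule group.inv_equality[OF CG_group _ a n])
qed

lemma bar_d3_alt: "bar_d3 G c y = (\<Sum>t\<in>{p. c p \<noteq> 0}. c t * e3 G t y)"
  unfolding bar_d3_def e3_def by (rule sum.cong[OF refl]) (simp add: split_beta)

lemma bar_d3_T: "finite T \<Longrightarrow> {p. c p \<noteq> 0} \<subseteq> T \<Longrightarrow> bar_d3 G c y = (\<Sum>t\<in>T. c t * e3 G t y)"
  unfolding bar_d3_alt by (rule sum.mono_neutral_left) auto

lemma boundary2_zero: "boundary2 Q (\<lambda>y. 0)"
  unfolding boundary2_def
  by (intro exI[of _ "\<lambda>t. 0"]) (simp add: chain3_def bar_d3_def)

lemma boundary2_add: assumes "boundary2 Q a" "boundary2 Q b" shows "boundary2 Q (\<lambda>y. a y + b y)"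
proof -
  obtain c1 where c1: "chain3 Q c1" "\<And>p. bar_d3 Q c1 p = a p" using assms(1) boundary2_def by blast
  obtain c2 where c2: "chain3 Q c2" "\<And>p. bar_d3 Q c2 p = b p" using assms(2) boundary2_def by blast
  define T where "T = {p. c1 p \<noteq> 0} \<union> {p. c2 p \<noteq> 0}"
  have fT: "finite T" using c1 c2 unfolding T_def chain3_def by simp
  have ch: "chain3 Q (\<lambda>t. c1 t + c2 t)"
  proof -
    have "{p. c1 p + c2 p \<noteq> 0} \<subseteq> T" unfolding T_def by auto
    then have f: "finite {p. c1 p + c2 p \<noteq> 0}" using fT finite_subset by blast
    have "p \<in> carrier Q \<times> carrier Q \<times> carrier Q" if "c1 p + c2 p \<noteq> 0" for p
    proof -
      have "c1 p \<noteq> 0 \<or> c2 p \<noteq> 0" using that by auto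
      then show ?thesis using c1(1) c2(1) unfolding chain3_def by blast
    qed
    then show ?thesis using f unfolding chain3_def by blast
  qed
  have "bar_d3 Q (\<lambda>t. c1 t + c2 t) p = a p + b p" for p
  proof -
    have "bar_d3 Q (\<lambda>t. c1 t + c2 t) p = (\<Sum>t\<in>T. (c1 t + c2 t) * e3 Q t p)"
      by (rule bar_d3_T[OF fT]) (auto simp: T_def)
    also have "\<dots> = (\<Sum>t\<in>T. c1 t * e3 Q t p) + (\<Sum>t\<in>T. c2 t * e3 Q t p)"
      by (simp add: algebra_simps sum.distrib)
    also have "\<dots> = bar_d3 Q c1 p + bar_d3 Q c2 p"
      by (simp add: bar_d3_T[OF fT] T_def)
    finally show ?thesis using c1 c2 by simp
  qed
  then show ?thesis unfolding boundary2_def using ch by blast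
qed

lemma boundary2_neg: assumes "boundary2 Q a" shows "boundary2 Q (\<lambda>y. - a y)"
proof -
  obtain c1 where c1: "chain3 Q c1" "\<And>p. bar_d3 Q c1 p = a p" using assms(1) boundary2_def by blast
  have ch: "chain3 Q (\<lambda>t. - c1 t)" using c1 unfolding chain3_def by simp
  have "bar_d3 Q (\<lambda>t. - c1 t) p = - a p" for p
    using c1(2)[of p] unfolding bar_d3_alt by (simp add: sum_negf)
  then show ?thesis unfolding boundary2_def using ch by blast
qed

lemma boundary2_point:
  assumes "g \<in> carrier Q" "h \<in> carrier Q" "k \<in> carrier Q"
  shows "boundary2 Q (e3 Q (g,h,k))"
proof -
  have ch: "chain3 Q (dlt (g,h,k))" using assms unfolding chain3_def dlt_def by auto
  have "bar_d3 Q (dlt (g,h,k)) p = e3 Q (g,h,k) p" for p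
    by (subst bar_d3_T[of "{(g,h,k)}"]) (auto simp: dlt_def)
  then show ?thesis unfolding boundary2_def using ch by blast
qed

lemma UB_subgroup: "subgroup (UB Q) (CG Q)"
proof (rule group.subgroupI[OF CG_group])
  show "UB Q \<subseteq> carrier (CG Q)" unfolding UB_def by auto
  show "UB Q \<noteq> {}" unfolding UB_def using chain2_zero boundary2_zero by blast
next
  fix a assume "a \<in> UB Q"
  then show "inv\<^bsub>CG Q\<^esub> a \<in> UB Q" unfolding UB_def
    by (simp add: CG_inv chain2_neg boundary2_neg)
next
  fix a b assume "a \<in> UB Q" "b \<in> UB Q"
  then show "a \<otimes>\<^bsub>CG Q\<^esub> b \<in> UB Q" unfolding UB_def
    by (simp add: chain2_add boundary2_add)
qed


definition MQ :: "('q,'d) monoid_scheme \<Rightarrow> ('q \<times> 'q \<Rightarrow> int) set monoid" where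
  "MQ Q = CG Q Mod UB Q"

definition DQ :: "('q,'d) monoid_scheme \<Rightarrow> 'q \<Rightarrow> 'q \<Rightarrow> 'q \<times> 'q \<Rightarrow> int" where
  "DQ Q q q' = (\<lambda>y. dlt (q, q') y - dlt (\<one>\<^bsub>Q\<^esub>, \<one>\<^bsub>Q\<^esub>) y)"

definition wQ :: "('q,'d) monoid_scheme \<Rightarrow> 'q \<Rightarrow> 'q \<Rightarrow> ('q \<times> 'q \<Rightarrow> int) set" where
  "wQ Q q q' = UB Q #>\<^bsub>CG Q\<^esub> DQ Q q q'"

lemma UB_normal: "UB Q \<lhd> CG Q"
  using CG_comm_group UB_subgroup by (rule comm_group.subgroup_imp_normal)

lemma MQ_comm_group: "comm_group (MQ Q)"
  unfolding MQ_def using CG_comm_group UB_subgroup by (rule comm_group.abelian_FactGroup)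

lemma MQ_mult: "a \<in> carrier (CG Q) \<Longrightarrow> b \<in> carrier (CG Q) \<Longrightarrow>
  (UB Q #>\<^bsub>CG Q\<^esub> a) \<otimes>\<^bsub>MQ Q\<^esub> (UB Q #>\<^bsub>CG Q\<^esub> b) = UB Q #>\<^bsub>CG Q\<^esub> (\<lambda>y. a y + b y)"
  unfolding MQ_def using normal.rcos_sum[OF UB_normal, where x=a and y=b] by simp

lemma MQ_one: "\<one>\<^bsub>MQ Q\<^esub> = UB Q" unfolding MQ_def by simp

lemma MQ_carrier: "a \<in> carrier (CG Q) \<Longrightarrow> UB Q #>\<^bsub>CG Q\<^esub> a \<in> carrier (MQ Q)"
  unfolding MQ_def FactGroup_def
  using group.rcosetsI[OF CG_group, where H="UB Q" and x=a] UB_subgroup[of Q] subgroup.subset by force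

lemma rcos_eq:
  assumes a: "a \<in> carrier (CG Q)" and b: "b \<in> carrier (CG Q)" and d: "(\<lambda>y. a y - b y) \<in> UB Q"
  shows "UB Q #>\<^bsub>CG Q\<^esub> a = UB Q #>\<^bsub>CG Q\<^esub> b"
proof -
  have dc: "(\<lambda>y. a y - b y) \<in> carrier (CG Q)" using d unfolding UB_def by simp
  have "a = (\<lambda>y. a y - b y) \<otimes>\<^bsub>CG Q\<^esub> b" by simp
  then have "UB Q #>\<^bsub>CG Q\<^esub> a = (UB Q #>\<^bsub>CG Q\<^esub> (\<lambda>y. a y - b y)) #>\<^bsub>CG Q\<^esub> b"
    using group.coset_mult_assoc[OF CG_group subgroup.subset[OF UB_subgroup] dc b] by simp
  also have "UB Q #>\<^bsub>CG Q\<^esub> (\<lambda>y. a y - b y) = UB Q"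
    using subgroup.rcos_const[OF UB_subgroup CG_group d] .
  finally show ?thesis .
qed

lemma rcos_one_iff:
  assumes a: "a \<in> carrier (CG Q)"
  shows "UB Q #>\<^bsub>CG Q\<^esub> a = UB Q \<longleftrightarrow> a \<in> UB Q"
proof
  assume "UB Q #>\<^bsub>CG Q\<^esub> a = UB Q"
  moreover have "a \<in> UB Q #>\<^bsub>CG Q\<^esub> a" using group.rcos_self[OF CG_group a UB_subgroup] .
  ultimately show "a \<in> UB Q" by simp
next
  assume "a \<in> UB Q"
  then show "UB Q #>\<^bsub>CG Q\<^esub> a = UB Q" using subgroup.rcos_const[OF UB_subgroup CG_group] by blast
qed

lemma chain2_dlt: "p \<in> carrier Q \<times> carrier Q \<Longrightarrow> chain2 Q (dlt p)"
  unfolding chain2_def dlt_def by auto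

lemma chain2_e3:
  assumes "g \<in> carrier Q" "h \<in> carrier Q" "k \<in> carrier Q" "group Q"
  shows "chain2 Q (e3 Q (g,h,k))"
proof -
  have S: "{p. e3 Q (g,h,k) p \<noteq> 0} \<subseteq> {(h,k), (g \<otimes>\<^bsub>Q\<^esub> h, k), (g, h \<otimes>\<^bsub>Q\<^esub> k), (g,h)}"
    unfolding e3_def by auto
  have C: "{(h,k), (g \<otimes>\<^bsub>Q\<^esub> h, k), (g, h \<otimes>\<^bsub>Q\<^esub> k), (g,h)} \<subseteq> carrier Q \<times> carrier Q"
    using assms(1-3) monoid.m_closed[OF group.is_monoid[OF assms(4)]] by auto
  have "finite {p. e3 Q (g,h,k) p \<noteq> 0}" using S by (rule finite_subset) simp
  then show ?thesis unfolding chain2_def using S C by blast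
qed

lemma e3_UB:
  assumes "g \<in> carrier Q" "h \<in> carrier Q" "k \<in> carrier Q" "group Q"
  shows "e3 Q (g,h,k) \<in> UB Q"
  unfolding UB_def using chain2_e3[OF assms] boundary2_point[OF assms(1-3)] by simp

lemma neg_UB: "a \<in> UB Q \<Longrightarrow> (\<lambda>y. - a y) \<in> UB Q"
  unfolding UB_def by (simp add: chain2_neg boundary2_neg)

lemma DQ_chain:
  assumes Q: "group Q" and c: "q \<in> carrier Q" "q' \<in> carrier Q"
  shows "DQ Q q q' \<in> carrier (CG Q)"
proof -
  have a: "chain2 Q (dlt (q,q'))" using c by (intro chain2_dlt) simp
  have o: "\<one>\<^bsub>Q\<^esub> \<in> carrier Q" using monoid.one_closed[OF group.is_monoid[OF Q]] .
  have b: "chain2 Q (\<lambda>y. - dlt (\<one>\<^bsub>Q\<^esub>, \<one>\<^bsub>Q\<^esub>) y)"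
    by (rule chain2_neg) (rule chain2_dlt, simp add: o)
  have "chain2 Q (\<lambda>y. dlt (q,q') y + - dlt (\<one>\<^bsub>Q\<^esub>, \<one>\<^bsub>Q\<^esub>) y)" by (rule chain2_add[OF a b])
  then show ?thesis by (simp add: DQ_def)
qed

lemma DQ_cocycle:
  "DQ Q q q' y + DQ Q (q \<otimes>\<^bsub>Q\<^esub> q') q'' y - (DQ Q q' q'' y + DQ Q q (q' \<otimes>\<^bsub>Q\<^esub> q'') y)
   = - e3 Q (q,q',q'') y"
  unfolding DQ_def dlt_def e3_def by simp

lemma DQ_l: "group Q \<Longrightarrow> q \<in> carrier Q \<Longrightarrow> DQ Q \<one>\<^bsub>Q\<^esub> q y = e3 Q (\<one>\<^bsub>Q\<^esub>, \<one>\<^bsub>Q\<^esub>, q) y"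
  unfolding DQ_def dlt_def e3_def by (simp add: group.is_monoid monoid.l_one monoid.one_closed)

lemma DQ_r: "group Q \<Longrightarrow> q \<in> carrier Q \<Longrightarrow> DQ Q q \<one>\<^bsub>Q\<^esub> y = - e3 Q (q, \<one>\<^bsub>Q\<^esub>, \<one>\<^bsub>Q\<^esub>) y"
  unfolding DQ_def dlt_def e3_def by (simp add: group.is_monoid monoid.r_one monoid.one_closed)

lemma cocyc_MQ:
  assumes Q: "group Q"
  shows "cocyc (MQ Q) Q (wQ Q)"
proof (rule cocyc.intro[OF MQ_comm_group Q], rule cocyc_axioms.intro)
  fix q q' assume "q \<in> carrier Q" "q' \<in> carrier Q"
  then show "wQ Q q q' \<in> carrier (MQ Q)" unfolding wQ_def by (intro MQ_carrier DQ_chain[OF Q])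
next
  fix q q' q'' assume c: "q \<in> carrier Q" "q' \<in> carrier Q" "q'' \<in> carrier Q"
  have m: "q \<otimes>\<^bsub>Q\<^esub> q' \<in> carrier Q" "q' \<otimes>\<^bsub>Q\<^esub> q'' \<in> carrier Q"
    using c monoid.m_closed[OF group.is_monoid[OF Q]] by auto
  have d1: "DQ Q q q' \<in> carrier (CG Q)" "DQ Q (q \<otimes>\<^bsub>Q\<^esub> q') q'' \<in> carrier (CG Q)"
    "DQ Q q' q'' \<in> carrier (CG Q)" "DQ Q q (q' \<otimes>\<^bsub>Q\<^esub> q'') \<in> carrier (CG Q)"
    using DQ_chain[OF Q c(1,2)] DQ_chain[OF Q m(1) c(3)] DQ_chain[OF Q c(2,3)] DQ_chain[OF Q c(1) m(2)] by auto
  have "wQ Q q q' \<otimes>\<^bsub>MQ Q\<^esub> wQ Q (q \<otimes>\<^bsub>Q\<^esub> q') q''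
      = UB Q #>\<^bsub>CG Q\<^esub> (\<lambda>y. DQ Q q q' y + DQ Q (q \<otimes>\<^bsub>Q\<^esub> q') q'' y)"
    unfolding wQ_def by (rule MQ_mult[OF d1(1,2)])
  also have "\<dots> = UB Q #>\<^bsub>CG Q\<^esub> (\<lambda>y. DQ Q q' q'' y + DQ Q q (q' \<otimes>\<^bsub>Q\<^esub> q'') y)"
  proof (rule rcos_eq)
    show "(\<lambda>y. DQ Q q q' y + DQ Q (q \<otimes>\<^bsub>Q\<^esub> q') q'' y) \<in> carrier (CG Q)"
      using d1 chain2_add by simp
    show "(\<lambda>y. DQ Q q' q'' y + DQ Q q (q' \<otimes>\<^bsub>Q\<^esub> q'') y) \<in> carrier (CG Q)"
      using d1 chain2_add by simp
    have "(\<lambda>y. DQ Q q q' y + DQ Q (q \<otimes>\<^bsub>Q\<^esub> q') q'' y - (DQ Q q' q'' y + DQ Q q (q' \<otimes>\<^bsub>Q\<^esub> q'') y))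
         = (\<lambda>y. - e3 Q (q,q',q'') y)"
      by (rule ext) (rule DQ_cocycle)
    then show "(\<lambda>y. DQ Q q q' y + DQ Q (q \<otimes>\<^bsub>Q\<^esub> q') q'' y - (DQ Q q' q'' y + DQ Q q (q' \<otimes>\<^bsub>Q\<^esub> q'') y)) \<in> UB Q"
      using neg_UB[OF e3_UB[OF c Q]] by simp
  qed
  also have "\<dots> = wQ Q q' q'' \<otimes>\<^bsub>MQ Q\<^esub> wQ Q q (q' \<otimes>\<^bsub>Q\<^esub> q'')"
    unfolding wQ_def by (rule MQ_mult[OF d1(3,4), symmetric])
  finally show "wQ Q q q' \<otimes>\<^bsub>MQ Q\<^esub> wQ Q (q \<otimes>\<^bsub>Q\<^esub> q') q'' = wQ Q q' q'' \<otimes>\<^bsub>MQ Q\<^esub> wQ Q q (q' \<otimes>\<^bsub>Q\<^esub> q'')" .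
next
  fix q assume c: "q \<in> carrier Q"
  have o: "\<one>\<^bsub>Q\<^esub> \<in> carrier Q" using monoid.one_closed[OF group.is_monoid[OF Q]] .
  have "DQ Q \<one>\<^bsub>Q\<^esub> q = e3 Q (\<one>\<^bsub>Q\<^esub>, \<one>\<^bsub>Q\<^esub>, q)"
    by (rule ext) (rule DQ_l[OF Q c])
  then have "DQ Q \<one>\<^bsub>Q\<^esub> q \<in> UB Q" using e3_UB[OF o o c Q] by simp
  then show "wQ Q \<one>\<^bsub>Q\<^esub> q = \<one>\<^bsub>MQ Q\<^esub>" unfolding wQ_def MQ_one
    using rcos_one_iff[OF DQ_chain[OF Q o c]] by simp
next
  fix q assume c: "q \<in> carrier Q"
  have o: "\<one>\<^bsub>Q\<^esub> \<in> carrier Q" using monoid.one_closed[OF group.is_monoid[OF Q]] .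
  have "DQ Q q \<one>\<^bsub>Q\<^esub> = (\<lambda>y. - e3 Q (q, \<one>\<^bsub>Q\<^esub>, \<one>\<^bsub>Q\<^esub>) y)"
    by (rule ext) (rule DQ_r[OF Q c])
  then have "DQ Q q \<one>\<^bsub>Q\<^esub> \<in> UB Q" using neg_UB[OF e3_UB[OF c o o Q]] by simp
  then show "wQ Q q \<one>\<^bsub>Q\<^esub> = \<one>\<^bsub>MQ Q\<^esub>" unfolding wQ_def MQ_one
    using rcos_one_iff[OF DQ_chain[OF Q c o]] by simp
qed


context comm_group begin

lemma pow_of_bool: "x \<in> carrier G \<Longrightarrow> x [^] ((c::int) * of_bool P) = (if P then x [^] c else \<one>)"
  by (cases P) simp_all

lemma fp_single:
  assumes XX: "finite XX" and f: "f \<in> XX \<rightarrow> carrier G" and abd: "a \<in> XX" "b \<in> XX" "d \<in> XX"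
  shows "finprod G (\<lambda>x. f x [^] ((c::int) * (of_bool (x = a) - of_bool (x = b) + of_bool (x = d)))) XX
       = (f a \<otimes> inv (f b) \<otimes> f d) [^] c"
proof -
  have fa: "f a \<in> carrier G" "f b \<in> carrier G" "f d \<in> carrier G" using f abd by auto
  have e: "f x [^] ((c::int) * (of_bool (x = a) - of_bool (x = b) + of_bool (x = d)))
      = (if a = x then f x [^] c else \<one>) \<otimes> (if b = x then f x [^] (-c) else \<one>) \<otimes> (if d = x then f x [^] c else \<one>)"
    if x: "x \<in> XX" for x
  proof -
    have fx: "f x \<in> carrier G" using f x by auto
    show ?thesis using fx
      by (cases "x = a"; cases "x = b"; cases "x = d") (simp_all add: int_pow_mult[symmetric] mult_2_right)
  qed
  have c1: "(\<lambda>x. if a = x then f x [^] c else \<one>) \<in> XX \<rightarrow> carrier G" using f by (auto simp: Pi_def)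
  have c2: "(\<lambda>x. if b = x then f x [^] (-c) else \<one>) \<in> XX \<rightarrow> carrier G" using f by (auto simp: Pi_def)
  have c3: "(\<lambda>x. if d = x then f x [^] c else \<one>) \<in> XX \<rightarrow> carrier G" using f by (auto simp: Pi_def)
  have c12: "(\<lambda>x. (if a = x then f x [^] c else \<one>) \<otimes> (if b = x then f x [^] (-c) else \<one>)) \<in> XX \<rightarrow> carrier G"
    using f by (auto simp: Pi_def)
  have c123: "(\<lambda>x. (if a = x then f x [^] c else \<one>) \<otimes> (if b = x then f x [^] (-c) else \<one>) \<otimes> (if d = x then f x [^] c else \<one>)) \<in> XX \<rightarrow> carrier G"
    using f by (auto simp: Pi_def)
  have "finprod G (\<lambda>x. f x [^] ((c::int) * (of_bool (x = a) - of_bool (x = b) + of_bool (x = d)))) XX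
      = finprod G (\<lambda>x. (if a = x then f x [^] c else \<one>) \<otimes> (if b = x then f x [^] (-c) else \<one>) \<otimes> (if d = x then f x [^] c else \<one>)) XX"
    by (rule finprod_cong'[OF refl c123]) (rule e)
  also have "\<dots> = finprod G (\<lambda>x. if a = x then f x [^] c else \<one>) XX \<otimes> finprod G (\<lambda>x. if b = x then f x [^] (-c) else \<one>) XX
      \<otimes> finprod G (\<lambda>x. if d = x then f x [^] c else \<one>) XX"
    using c1 c2 c3 c12 by (simp add: finprod_multf)
  also have "\<dots> = f a [^] c \<otimes> f b [^] (-c) \<otimes> f d [^] c"
  proof -
    have "finprod G (\<lambda>x. if a = x then f x [^] c else \<one>) XX = f a [^] c"
      using finprod_singleton[OF abd(1) XX, of "\<lambda>x. f x [^] c"] f by auto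
    moreover have "finprod G (\<lambda>x. if b = x then f x [^] (-c) else \<one>) XX = f b [^] (-c)"
      using finprod_singleton[OF abd(2) XX, of "\<lambda>x. f x [^] (-c)"] f by auto
    moreover have "finprod G (\<lambda>x. if d = x then f x [^] c else \<one>) XX = f d [^] c"
      using finprod_singleton[OF abd(3) XX, of "\<lambda>x. f x [^] c"] f by auto
    ultimately show ?thesis by simp
  qed
  also have "\<dots> = (f a \<otimes> inv (f b) \<otimes> f d) [^] c"
    using fa by (simp add: int_pow_distrib int_pow_inv int_pow_neg)
  finally show ?thesis .
qed

lemma fp_sum:
  assumes S: "finite S" and XX: "finite XX" and f: "f \<in> XX \<rightarrow> carrier G"
    and abd: "\<And>p. p \<in> S \<Longrightarrow> a p \<in> XX \<and> b p \<in> XX \<and> d p \<in> XX"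
  shows "finprod G (\<lambda>x. f x [^] (\<Sum>p\<in>S. (c p::int) * (of_bool (x = a p) - of_bool (x = b p) + of_bool (x = d p)))) XX
       = finprod G (\<lambda>p. (f (a p) \<otimes> inv (f (b p)) \<otimes> f (d p)) [^] c p) S"
  using S abd
proof (induction S rule: finite_induct)
  case empty
  then show ?case by (simp add: finprod_one_eqI)
next
  case (insert p S)
  have ab: "a p \<in> XX" "b p \<in> XX" "d p \<in> XX" using insert.prems by auto
  have fa: "f (a p) \<in> carrier G" "f (b p) \<in> carrier G" "f (d p) \<in> carrier G" using f ab by auto
  define E where "E = (\<lambda>x. c p * (of_bool (x = a p) - of_bool (x = b p) + of_bool (x = d p)))"
  define R where "R = (\<lambda>x. \<Sum>p\<in>S. (c p::int) * (of_bool (x = a p) - of_bool (x = b p) + of_bool (x = d p)))"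
  have "finprod G (\<lambda>x. f x [^] (\<Sum>p\<in>insert p S. (c p::int) * (of_bool (x = a p) - of_bool (x = b p) + of_bool (x = d p)))) XX
     = finprod G (\<lambda>x. f x [^] E x \<otimes> f x [^] R x) XX"
  proof (rule finprod_cong'[OF refl])
    show "(\<lambda>x. f x [^] E x \<otimes> f x [^] R x) \<in> XX \<rightarrow> carrier G" using f by (auto simp: Pi_def)
  next
    fix x assume x: "x \<in> XX"
    have fx: "f x \<in> carrier G" using f x by auto
    have "(\<Sum>p\<in>insert p S. (c p::int) * (of_bool (x = a p) - of_bool (x = b p) + of_bool (x = d p))) = E x + R x"
      unfolding E_def R_def by (rule sum.insert[OF insert.hyps])
    then show "f x [^] (\<Sum>p\<in>insert p S. (c p::int) * (of_bool (x = a p) - of_bool (x = b p) + of_bool (x = d p))) = f x [^] E x \<otimes> f x [^] R x"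
      using int_pow_mult[OF fx] by simp
  qed
  also have "\<dots> = finprod G (\<lambda>x. f x [^] E x) XX \<otimes> finprod G (\<lambda>x. f x [^] R x) XX"
    using f by (intro finprod_multf) auto
  also have "finprod G (\<lambda>x. f x [^] E x) XX = (f (a p) \<otimes> inv (f (b p)) \<otimes> f (d p)) [^] c p"
    unfolding E_def by (rule fp_single[OF XX f ab])
  also have "finprod G (\<lambda>x. f x [^] R x) XX = finprod G (\<lambda>p. (f (a p) \<otimes> inv (f (b p)) \<otimes> f (d p)) [^] c p) S"
    unfolding R_def using insert.IH insert.prems by auto
  finally have r: "finprod G (\<lambda>x. f x [^] (\<Sum>p\<in>insert p S. (c p::int) * (of_bool (x = a p) - of_bool (x = b p) + of_bool (x = d p)))) XX
     = (f (a p) \<otimes> inv (f (b p)) \<otimes> f (d p)) [^] c p \<otimes> finprod G (\<lambda>p. (f (a p) \<otimes> inv (f (b p)) \<otimes> f (d p)) [^] c p) S" .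
  have cl: "(\<lambda>p. (f (a p) \<otimes> inv (f (b p)) \<otimes> f (d p)) [^] c p) \<in> S \<rightarrow> carrier G"
    using insert.prems f by (auto simp: Pi_def)
  show ?case using r finprod_insert[OF insert.hyps cl] fa by simp
qed

end

lemma hom_finprod_cg:
  assumes G: "comm_group G" and H: "comm_group H" and h: "h \<in> hom G H"
    and S: "finite S" and f: "f \<in> S \<rightarrow> carrier G"
  shows "h (finprod G f S) = finprod H (\<lambda>x. h (f x)) S"
  using S f
proof (induction S rule: finite_induct)
  case empty
  have "group_hom G H h" using G H h by (simp add: group_hom_def group_hom_axioms_def comm_group.axioms(2))
  then show ?case using group_hom.hom_one comm_monoid.finprod_empty[OF comm_group.axioms(1)[OF G]]
      comm_monoid.finprod_empty[OF comm_group.axioms(1)[OF H]] by metis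
next
  case (insert p S)
  have gh: "group_hom G H h" using G H h by (simp add: group_hom_def group_hom_axioms_def comm_group.axioms(2))
  have fS: "f \<in> S \<rightarrow> carrier G" and fp: "f p \<in> carrier G" using insert.prems by auto
  have "h (finprod G f (insert p S)) = h (f p \<otimes>\<^bsub>G\<^esub> finprod G f S)"
    using comm_monoid.finprod_insert[OF comm_group.axioms(1)[OF G] insert.hyps fS fp] by simp
  also have "\<dots> = h (f p) \<otimes>\<^bsub>H\<^esub> h (finprod G f S)"
    using h fp comm_monoid.finprod_closed[OF comm_group.axioms(1)[OF G] fS] by (simp add: hom_mult)
  also have "h (finprod G f S) = finprod H (\<lambda>x. h (f x)) S" using insert.IH fS by simp
  also have "h (f p) \<otimes>\<^bsub>H\<^esub> finprod H (\<lambda>x. h (f x)) S = finprod H (\<lambda>x. h (f x)) (insert p S)"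
  proof -
    have hS: "(\<lambda>x. h (f x)) \<in> S \<rightarrow> carrier H" using fS h hom_in_carrier by fastforce
    have hp: "h (f p) \<in> carrier H" using hom_in_carrier[OF h fp] .
    show ?thesis using comm_monoid.finprod_insert[OF comm_group.axioms(1)[OF H] insert.hyps hS hp] by simp
  qed
  finally show ?case .
qed


lemma hom_cmt: "group_hom G H h \<Longrightarrow> x \<in> carrier G \<Longrightarrow> y \<in> carrier G \<Longrightarrow>
  h (cmt G x y) = cmt H (h x) (h y)"
proof -
  assume h: "group_hom G H h" and x: "x \<in> carrier G" and y: "y \<in> carrier G"
  interpret h: group_hom G H h by (rule h)
  show ?thesis unfolding cmt_def using x y by simp
qed

lemma preimage_subgroup:
  assumes h: "group_hom G H h" and K: "subgroup K H"
  shows "subgroup {x \<in> carrier G. h x \<in> K} G"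
proof -
  interpret h: group_hom G H h by (rule h)
  show ?thesis
  proof (rule h.G.subgroupI)
    show "{x \<in> carrier G. h x \<in> K} \<subseteq> carrier G" by blast
    have "\<one>\<^bsub>G\<^esub> \<in> {x \<in> carrier G. h x \<in> K}" using subgroup.one_closed[OF K] by simp
    then show "{x \<in> carrier G. h x \<in> K} \<noteq> {}" by blast
  next
    fix a assume a: "a \<in> {x \<in> carrier G. h x \<in> K}"
    then have "inv\<^bsub>H\<^esub> (h a) \<in> K" using subgroup.m_inv_closed[OF K] by blast
    then show "inv\<^bsub>G\<^esub> a \<in> {x \<in> carrier G. h x \<in> K}" using a by simp
  next
    fix a b assume a: "a \<in> {x \<in> carrier G. h x \<in> K}" and b: "b \<in> {x \<in> carrier G. h x \<in> K}"
    have "h a \<otimes>\<^bsub>H\<^esub> h b \<in> K" using subgroup.m_closed[OF K] a b by blast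
    then show "a \<otimes>\<^bsub>G\<^esub> b \<in> {x \<in> carrier G. h x \<in> K}" using a b by simp
  qed
qed

lemma lc_image:
  assumes h: "group_hom G H h"
  shows "x \<in> lower_central G j \<Longrightarrow> h x \<in> lower_central H j"
proof (induction j arbitrary: x)
  case 0 then show ?case using h by (simp add: group_hom.hom_closed)
next
  case (Suc j)
  interpret h: group_hom G H h by (rule h)
  show ?case
  proof (cases "j = 0")
    case True then show ?thesis using Suc.prems by (simp add: h.hom_closed)
  next
    case False
    define P where "P = {x \<in> carrier G. h x \<in> lower_central H (Suc j)}"
    have P: "subgroup P G" unfolding P_def by (rule preimage_subgroup[OF h h.H.lc_subgroup])
    have gens: "{cmt G b x |b x. b \<in> carrier G \<and> x \<in> lower_central G j} \<subseteq> P"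
    proof safe
      fix b x assume b: "b \<in> carrier G" and x: "x \<in> lower_central G j"
      have xc: "x \<in> carrier G" using h.G.lc_mem[OF x] .
      have "h (cmt G b x) = cmt H (h b) (h x)" using hom_cmt[OF h b xc] .
      moreover have "cmt H (h b) (h x) \<in> lower_central H (Suc j)"
        using h.H.lc_gen[of j "h b" "h x"] False b Suc.IH[OF x] by simp
      ultimately show "cmt G b x \<in> P" unfolding P_def using b xc by simp
    qed
    have eq: "lower_central G (Suc j) = generate G {cmt G b x |b x. b \<in> carrier G \<and> x \<in> lower_central G j}"
      using h.G.lc_Suc False by simp
    have "lower_central G (Suc j) \<subseteq> P" unfolding eq by (rule h.G.generate_subgroup_incl[OF gens P])
    then show ?thesis using Suc.prems unfolding P_def by blast
  qed
qed

lemma lc_lift: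
  assumes h: "group_hom G H h" and surj: "h ` carrier G = carrier H"
  shows "a \<in> lower_central H j \<Longrightarrow> \<exists>x \<in> lower_central G j. h x = a"
proof (induction j arbitrary: a)
  case 0
  then have "a \<in> h ` carrier G" using surj by simp
  then show ?case by auto
next
  case (Suc j)
  interpret h: group_hom G H h by (rule h)
  show ?case
  proof (cases "j = 0")
    case True
    then have "a \<in> h ` carrier G" using Suc.prems surj by simp
    then show ?thesis using True by auto
  next
    case False
    define P where "P = h ` lower_central G (Suc j)"
    have P: "subgroup P H" unfolding P_def by (rule h.subgroup_img_is_subgroup[OF h.G.lc_subgroup])
    have gens: "{cmt H b x |b x. b \<in> carrier H \<and> x \<in> lower_central H j} \<subseteq> P"
    proof safe
      fix b x assume b: "b \<in> carrier H" and x: "x \<in> lower_central H j"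
      have "b \<in> h ` carrier G" using b surj by simp
      then obtain b0 where b0: "b0 \<in> carrier G" "h b0 = b" by auto
      obtain x0 where x0: "x0 \<in> lower_central G j" "h x0 = x" using Suc.IH[OF x] by blast
      have x0c: "x0 \<in> carrier G" using h.G.lc_mem[OF x0(1)] .
      have "h (cmt G b0 x0) = cmt H b x" using hom_cmt[OF h b0(1) x0c] b0 x0 by simp
      moreover have "cmt G b0 x0 \<in> lower_central G (Suc j)"
        using h.G.lc_gen[of j b0 x0] False b0 x0 by simp
      ultimately show "cmt H b x \<in> P" unfolding P_def by (metis image_eqI)
    qed
    have eq: "lower_central H (Suc j) = generate H {cmt H b x |b x. b \<in> carrier H \<and> x \<in> lower_central H j}"
      using h.H.lc_Suc False by simp
    have "lower_central H (Suc j) \<subseteq> P" unfolding eq by (rule h.H.generate_subgroup_incl[OF gens P])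
    then show ?thesis using Suc.prems unfolding P_def by blast
  qed
qed

lemma (in group) cmt_one_comm: "x \<in> carrier G \<Longrightarrow> y \<in> carrier G \<Longrightarrow> cmt G x y = \<one> \<Longrightarrow> x \<otimes> y = y \<otimes> x"
proof -
  assume x: "x \<in> carrier G" and y: "y \<in> carrier G" and c: "cmt G x y = \<one>"
  have "x \<otimes> y = (x \<otimes> y \<otimes> inv x \<otimes> inv y) \<otimes> (y \<otimes> x)" using x y by (simp add: m_assoc)
  also have "\<dots> = y \<otimes> x" using c x y unfolding cmt_def by simp
  finally show ?thesis .
qed

lemma (in group) cmt_central: "x \<in> carrier G \<Longrightarrow> c \<in> carrier G \<Longrightarrow> x \<otimes> c = c \<otimes> x \<Longrightarrow> cmt G x c = \<one>"
  unfolding cmt_def by (simp add: m_assoc)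


lemma cocyc_pull:
  assumes cw: "cocyc M Q w" and B: "group B" and f: "f \<in> hom B Q"
  shows "cocyc M B (\<lambda>b b'. w (f b) (f b'))"
proof -
  interpret cocyc M Q w by (rule cw)
  interpret f: group_hom B Q f using B f by (simp add: group_hom_def group_hom_axioms_def Q.is_group)
  show ?thesis
  proof (rule cocyc.intro[OF M.comm_group_axioms B], rule cocyc_axioms.intro)
    fix q q' assume "q \<in> carrier B" "q' \<in> carrier B"
    then show "w (f q) (f q') \<in> carrier M" by simp
  next
    fix q q' q'' assume c: "q \<in> carrier B" "q' \<in> carrier B" "q'' \<in> carrier B"
    show "w (f q) (f q') \<otimes>\<^bsub>M\<^esub> w (f (q \<otimes>\<^bsub>B\<^esub> q')) (f q'') = w (f q') (f q'') \<otimes>\<^bsub>M\<^esub> w (f q) (f (q' \<otimes>\<^bsub>B\<^esub> q''))"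
      using c w_cocycle[of "f q" "f q'" "f q''"] by simp
  next
    fix q assume "q \<in> carrier B"
    then show "w (f \<one>\<^bsub>B\<^esub>) (f q) = \<one>\<^bsub>M\<^esub>" by simp
  next
    fix q assume "q \<in> carrier B"
    then show "w (f q) (f \<one>\<^bsub>B\<^esub>) = \<one>\<^bsub>M\<^esub>" by simp
  qed
qed

lemma cocyc_restrict:
  assumes cw: "cocyc M Q w" and A: "subgroup A Q"
  shows "cocyc M (Q\<lparr>carrier := A\<rparr>) w"
proof -
  interpret cocyc M Q w by (rule cw)
  have sub: "A \<subseteq> carrier Q" using subgroup.subset[OF A] .
  show ?thesis
  proof (rule cocyc.intro[OF M.comm_group_axioms subgroup.subgroup_is_group[OF A Q.is_group]], rule cocyc_axioms.intro)
    fix q q' assume "q \<in> carrier (Q\<lparr>carrier := A\<rparr>)" "q' \<in> carrier (Q\<lparr>carrier := A\<rparr>)"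
    then have "q \<in> carrier Q" "q' \<in> carrier Q" using sub by auto
    then show "w q q' \<in> carrier M" by simp
  next
    fix q q' q'' assume "q \<in> carrier (Q\<lparr>carrier := A\<rparr>)" "q' \<in> carrier (Q\<lparr>carrier := A\<rparr>)" "q'' \<in> carrier (Q\<lparr>carrier := A\<rparr>)"
    then have "q \<in> carrier Q" "q' \<in> carrier Q" "q'' \<in> carrier Q" using sub by auto
    then show "w q q' \<otimes>\<^bsub>M\<^esub> w (q \<otimes>\<^bsub>Q\<lparr>carrier := A\<rparr>\<^esub> q') q'' = w q' q'' \<otimes>\<^bsub>M\<^esub> w q (q' \<otimes>\<^bsub>Q\<lparr>carrier := A\<rparr>\<^esub> q'')"
      using w_cocycle by simp
  next
    fix q assume "q \<in> carrier (Q\<lparr>carrier := A\<rparr>)"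
    then have "q \<in> carrier Q" using sub by auto
    then show "w \<one>\<^bsub>Q\<lparr>carrier := A\<rparr>\<^esub> q = \<one>\<^bsub>M\<^esub>" by simp
  next
    fix q assume "q \<in> carrier (Q\<lparr>carrier := A\<rparr>)"
    then have "q \<in> carrier Q" using sub by auto
    then show "w q \<one>\<^bsub>Q\<lparr>carrier := A\<rparr>\<^esub> = \<one>\<^bsub>M\<^esub>" by simp
  qed
qed

lemma key_sym:
  fixes M :: "('m,'c) monoid_scheme" and Q :: "('q,'d) monoid_scheme" and B :: "('b,'e) monoid_scheme"
  assumes cw: "cocyc M Q w" and B: "group B" and pr: "pr \<in> hom B Q" and k: "1 \<le> k"
    and triv: "\<And>n. n \<in> lower_central B (2*k-1) \<Longrightarrow> pr n = \<one>\<^bsub>Q\<^esub>"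
    and a: "a \<in> lower_central B k" and b: "b \<in> lower_central B k"
  shows "w (pr a) (pr b) = w (pr b) (pr a) \<and> pr a \<otimes>\<^bsub>Q\<^esub> pr b = pr b \<otimes>\<^bsub>Q\<^esub> pr a"
proof -
  interpret cocyc M Q w by (rule cw)
  interpret B: group B by (rule B)
  interpret pr: group_hom B Q pr using B pr by (simp add: group_hom_def group_hom_axioms_def Q.is_group)
  define wB where "wB = (\<lambda>b b'. w (pr b) (pr b'))"
  have cB: "cocyc M B wB" unfolding wB_def by (rule cocyc_pull[OF cw B pr])
  define EB where "EB = ext M B wB"
  define EQ where "EQ = ext M Q w"
  have gEB: "group EB" unfolding EB_def by (rule cocyc.ext_group[OF cB])
  have gEQ: "group EQ" unfolding EQ_def by (rule ext_group)
  interpret EB: group EB by (rule gEB)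
  interpret EQ: group EQ by (rule gEQ)
  have sndh: "group_hom EB B snd"
  proof -
    have "snd \<in> hom EB B"
    proof (rule homI)
      fix x assume "x \<in> carrier EB" then show "snd x \<in> carrier B" unfolding EB_def by auto
    next
      fix x y assume "x \<in> carrier EB" "y \<in> carrier EB"
      then show "snd (x \<otimes>\<^bsub>EB\<^esub> y) = snd x \<otimes>\<^bsub>B\<^esub> snd y" unfolding EB_def by (cases x, cases y) simp
    qed
    then show ?thesis using gEB B by (simp add: group_hom_def group_hom_axioms_def)
  qed
  have surj: "snd ` carrier EB = carrier B"
  proof
    show "snd ` carrier EB \<subseteq> carrier B" unfolding EB_def by auto
    show "carrier B \<subseteq> snd ` carrier EB"
    proof
      fix b assume "b \<in> carrier B"
      then have "(\<one>\<^bsub>M\<^esub>, b) \<in> carrier EB" unfolding EB_def by simp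
      then show "b \<in> snd ` carrier EB" by (metis snd_conv image_eqI)
    qed
  qed
  define hh where "hh = (\<lambda>x::'m \<times> 'b. (fst x, pr (snd x)))"
  have hhh: "group_hom EB EQ hh"
  proof -
    have "hh \<in> hom EB EQ"
    proof (rule homI)
      fix x assume "x \<in> carrier EB" then show "hh x \<in> carrier EQ" unfolding EB_def EQ_def hh_def by auto
    next
      fix x y assume "x \<in> carrier EB" "y \<in> carrier EB"
      then show "hh (x \<otimes>\<^bsub>EB\<^esub> y) = hh x \<otimes>\<^bsub>EQ\<^esub> hh y" unfolding EB_def EQ_def hh_def wB_def
        by (cases x, cases y) simp
    qed
    then show ?thesis using gEB gEQ by (simp add: group_hom_def group_hom_axioms_def)
  qed
  interpret hh: group_hom EB EQ hh by (rule hhh)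
  obtain x where x: "x \<in> lower_central EB k" "snd x = a" using lc_lift[OF sndh surj a] by blast
  obtain y where y: "y \<in> lower_central EB k" "snd y = b" using lc_lift[OF sndh surj b] by blast
  have xc: "x \<in> carrier EB" using EB.lc_mem[OF x(1)] .
  have yc: "y \<in> carrier EB" using EB.lc_mem[OF y(1)] .
  have c: "cmt EB x y \<in> lower_central EB (k + k)" using EB.lc_bracket[OF _ _ x(1) y(1)] k by simp
  have kk: "k + k = Suc (2*k-1)" "0 < 2*k-1" using k by auto
  have ker: "lower_central EB (k + k) \<subseteq> kernel EB EQ hh"
  proof -
    have eq: "lower_central EB (k + k) = generate EB {cmt EB u v |u v. u \<in> carrier EB \<and> v \<in> lower_central EB (2*k-1)}"
      unfolding kk(1) by (rule EB.lc_Suc[OF kk(2)])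
    have gens: "{cmt EB u v |u v. u \<in> carrier EB \<and> v \<in> lower_central EB (2*k-1)} \<subseteq> kernel EB EQ hh"
    proof (rule subsetI)
      fix z assume "z \<in> {cmt EB u v |u v. u \<in> carrier EB \<and> v \<in> lower_central EB (2*k-1)}"
      then obtain u v where z: "z = cmt EB u v" and u: "u \<in> carrier EB" and v: "v \<in> lower_central EB (2*k-1)" by blast
      have vc: "v \<in> carrier EB" using EB.lc_mem[OF v] .
      have "snd v \<in> lower_central B (2*k-1)" using lc_image[OF sndh v] .
      then have hv: "hh v = (fst v, \<one>\<^bsub>Q\<^esub>)" unfolding hh_def using triv by simp
      have fv: "fst v \<in> carrier M" using vc unfolding EB_def by auto
      have central: "hh u \<otimes>\<^bsub>EQ\<^esub> hh v = hh v \<otimes>\<^bsub>EQ\<^esub> hh u"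
      proof -
        have "hh u \<in> carrier EQ" using hh.hom_closed[OF u] .
        then obtain m q where mq: "hh u = (m, q)" "m \<in> carrier M" "q \<in> carrier Q" unfolding EQ_def by auto
        show ?thesis unfolding hv mq(1) EQ_def using mq fv by (simp add: M.m_comm)
      qed
      have "hh (cmt EB u v) = cmt EQ (hh u) (hh v)" using hom_cmt[OF hhh u vc] .
      also have "\<dots> = \<one>\<^bsub>EQ\<^esub>" using EQ.cmt_central[OF hh.hom_closed[OF u] hh.hom_closed[OF vc] central] .
      finally show "z \<in> kernel EB EQ hh" unfolding kernel_def z using u vc by simp
    qed
    show ?thesis unfolding eq by (rule EB.generate_subgroup_incl[OF gens hh.subgroup_kernel])
  qed
  have "hh (cmt EB x y) = \<one>\<^bsub>EQ\<^esub>" using c ker unfolding kernel_def by blast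
  then have "cmt EQ (hh x) (hh y) = \<one>\<^bsub>EQ\<^esub>" using hom_cmt[OF hhh xc yc] by simp
  then have com: "hh x \<otimes>\<^bsub>EQ\<^esub> hh y = hh y \<otimes>\<^bsub>EQ\<^esub> hh x"
    using EQ.cmt_one_comm[OF hh.hom_closed[OF xc] hh.hom_closed[OF yc]] by simp
  have fx: "fst x \<in> carrier M" "fst y \<in> carrier M" using xc yc unfolding EB_def by auto
  have ab: "a \<in> carrier B" "b \<in> carrier B" using B.lc_mem a b by auto
  have hx: "hh x = (fst x, pr a)" "hh y = (fst y, pr b)" unfolding hh_def using x y by auto
  have e: "fst x \<otimes>\<^bsub>M\<^esub> fst y \<otimes>\<^bsub>M\<^esub> w (pr a) (pr b) = fst y \<otimes>\<^bsub>M\<^esub> fst x \<otimes>\<^bsub>M\<^esub> w (pr b) (pr a)"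
    and e2: "pr a \<otimes>\<^bsub>Q\<^esub> pr b = pr b \<otimes>\<^bsub>Q\<^esub> pr a"
    using com unfolding hx EQ_def by simp_all
  have "fst x \<otimes>\<^bsub>M\<^esub> fst y \<otimes>\<^bsub>M\<^esub> w (pr a) (pr b) = fst x \<otimes>\<^bsub>M\<^esub> fst y \<otimes>\<^bsub>M\<^esub> w (pr b) (pr a)"
    using e fx by (simp add: M.m_comm)
  then have "w (pr a) (pr b) = w (pr b) (pr a)"
    using fx ab by (simp add: M.m_assoc)
  then show ?thesis using e2 by simp
qed


lemma chain2_smult: "chain2 Q v \<Longrightarrow> chain2 Q (\<lambda>y. (n::int) * v y)"
proof -
  assume v: "chain2 Q v"
  have "{p. n * v p \<noteq> 0} \<subseteq> {p. v p \<noteq> 0}" by auto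
  then show ?thesis using v unfolding chain2_def by (auto intro: finite_subset)
qed

lemma CG_pow_nat: "v [^]\<^bsub>CG Q\<^esub> (m::nat) = (\<lambda>y. of_nat m * v y)"
proof (induction m)
  case 0
  then show ?case by simp
next
  case (Suc m)
  have "v [^]\<^bsub>CG Q\<^esub> Suc m = v [^]\<^bsub>CG Q\<^esub> m \<otimes>\<^bsub>CG Q\<^esub> v" by (rule nat_pow_Suc)
  also have "\<dots> = (\<lambda>y. of_nat m * v y + v y)" using Suc by simp
  also have "\<dots> = (\<lambda>y. of_nat (Suc m) * v y)" by (simp add: fun_eq_iff distrib_right)
  finally show ?case .
qed

lemma CG_pow: "v \<in> carrier (CG Q) \<Longrightarrow> v [^]\<^bsub>CG Q\<^esub> (n::int) = (\<lambda>y. n * v y)"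
proof -
  assume v: "v \<in> carrier (CG Q)"
  show ?thesis
  proof (cases "n < 0")
    case True
    have c: "v [^]\<^bsub>CG Q\<^esub> nat (- n) \<in> carrier (CG Q)"
      unfolding CG_pow_nat using v by (simp add: chain2_smult)
    have "v [^]\<^bsub>CG Q\<^esub> n = inv\<^bsub>CG Q\<^esub> (v [^]\<^bsub>CG Q\<^esub> nat (- n))"
      using True by (subst int_pow_def2) simp
    also have "\<dots> = (\<lambda>y. - (v [^]\<^bsub>CG Q\<^esub> nat (- n)) y)" by (rule CG_inv[OF c])
    also have "\<dots> = (\<lambda>y. n * v y)" using True unfolding CG_pow_nat by (simp add: fun_eq_iff)
    finally show ?thesis .
  next
    case False
    then show ?thesis by (subst int_pow_def2) (simp add: CG_pow_nat)
  qed
qed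

lemma CG_finprod:
  assumes S: "finite S" and f: "f \<in> S \<rightarrow> carrier (CG Q)"
  shows "finprod (CG Q) f S = (\<lambda>y. \<Sum>p\<in>S. f p y)"
  using S f
proof (induction S rule: finite_induct)
  case empty
  then show ?case using comm_monoid.finprod_empty[OF comm_group.axioms(1)[OF CG_comm_group]] by (simp add: fun_eq_iff)
next
  case (insert p S)
  have fS: "f \<in> S \<rightarrow> carrier (CG Q)" and fp: "f p \<in> carrier (CG Q)" using insert.prems by auto
  have "finprod (CG Q) f (insert p S) = f p \<otimes>\<^bsub>CG Q\<^esub> finprod (CG Q) f S"
    by (rule comm_monoid.finprod_insert[OF comm_group.axioms(1)[OF CG_comm_group] insert.hyps fS fp])
  then show ?case using insert.IH[OF fS] insert.hyps by (simp add: fun_eq_iff)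
qed

lemma bar_d2_alt: "bar_d2 G c x = (\<Sum>p\<in>{p. c p \<noteq> 0}. c p * (of_bool (x = snd p) - of_bool (x = fst p \<otimes>\<^bsub>G\<^esub> snd p) + of_bool (x = fst p)))"
  unfolding bar_d2_def by (rule sum.cong[OF refl]) (simp add: split_beta)

lemma sum_of_bool_in: "finite XX \<Longrightarrow> a \<in> XX \<Longrightarrow> (\<Sum>x\<in>XX. (of_bool (x = a) :: int)) = 1"
  by (simp add: of_bool_def sum.delta)

lemma cycle_sum_zero:
  assumes z: "chain2 G z" and d: "\<And>x. bar_d2 G z x = 0"
  shows "(\<Sum>p\<in>{p. z p \<noteq> 0}. z p) = 0"
proof -
  define S where "S = {p. z p \<noteq> 0}"
  have fS: "finite S" using z unfolding chain2_def S_def by simp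
  define XX where "XX = fst ` S \<union> snd ` S \<union> (\<lambda>p. fst p \<otimes>\<^bsub>G\<^esub> snd p) ` S"
  have fX: "finite XX" unfolding XX_def using fS by simp
  have "0 = (\<Sum>x\<in>XX. bar_d2 G z x)" using d by simp
  also have "\<dots> = (\<Sum>x\<in>XX. \<Sum>p\<in>S. z p * (of_bool (x = snd p) - of_bool (x = fst p \<otimes>\<^bsub>G\<^esub> snd p) + of_bool (x = fst p)))"
    unfolding bar_d2_alt S_def ..
  also have "\<dots> = (\<Sum>p\<in>S. \<Sum>x\<in>XX. z p * (of_bool (x = snd p) - of_bool (x = fst p \<otimes>\<^bsub>G\<^esub> snd p) + of_bool (x = fst p)))"
    by (rule sum.swap)
  also have "\<dots> = (\<Sum>p\<in>S. z p)"
  proof (rule sum.cong[OF refl])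
    fix p assume p: "p \<in> S"
    have m: "snd p \<in> XX" "fst p \<otimes>\<^bsub>G\<^esub> snd p \<in> XX" "fst p \<in> XX" unfolding XX_def using p by auto
    have "(\<Sum>x\<in>XX. z p * (of_bool (x = snd p) - of_bool (x = fst p \<otimes>\<^bsub>G\<^esub> snd p) + of_bool (x = fst p)))
        = z p * ((\<Sum>x\<in>XX. of_bool (x = snd p)) - (\<Sum>x\<in>XX. of_bool (x = fst p \<otimes>\<^bsub>G\<^esub> snd p)) + (\<Sum>x\<in>XX. of_bool (x = fst p)))"
      by (simp add: sum_distrib_left[symmetric] sum.distrib sum_subtractf)
    also have "\<dots> = z p" using sum_of_bool_in[OF fX m(1)] sum_of_bool_in[OF fX m(2)] sum_of_bool_in[OF fX m(3)] by simp
    finally show "(\<Sum>x\<in>XX. z p * (of_bool (x = snd p) - of_bool (x = fst p \<otimes>\<^bsub>G\<^esub> snd p) + of_bool (x = fst p))) = z p" .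
  qed
  finally show ?thesis unfolding S_def by simp
qed

lemma push2_alt:
  assumes "finite {q. c q \<noteq> 0}"
  shows "push2 f c y = (\<Sum>q\<in>{q. c q \<noteq> 0}. c q * dlt (f (fst q), f (snd q)) y)"
proof -
  have "{q. c q \<noteq> 0 \<and> (f (fst q), f (snd q)) = y} = {q \<in> {q. c q \<noteq> 0}. (f (fst q), f (snd q)) = y}" by auto
  then have "push2 f c y = (\<Sum>q\<in>{q \<in> {q. c q \<noteq> 0}. (f (fst q), f (snd q)) = y}. c q)" unfolding push2_def by simp
  also have "\<dots> = (\<Sum>q\<in>{q. c q \<noteq> 0}. if (f (fst q), f (snd q)) = y then c q else 0)"
    by (rule sum.inter_filter[OF assms])
  also have "\<dots> = (\<Sum>q\<in>{q. c q \<noteq> 0}. c q * dlt (f (fst q), f (snd q)) y)"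
    by (rule sum.cong[OF refl]) (auto simp: dlt_def)
  finally show ?thesis .
qed


theorem lemma5p4:
  fixes B :: "('a, 'b) monoid_scheme" and k :: nat
  assumes "group B" and "k \<ge> 1"
  shows "H2_map_zero (B\<lparr>carrier := lower_central B k\<rparr>)
           (B Mod lower_central B (2 * k - 1))
           ((\<lambda>x. lower_central B (2 * k - 1) #>\<^bsub>B\<^esub> x) \<circ> id)"
proof -
  interpret B: group B by (rule assms(1))
  define N where "N = lower_central B (2*k-1)"
  define Bk where "Bk = lower_central B k"
  have Nn: "N \<lhd> B" unfolding N_def by (rule B.lc_normal)
  define Q where "Q = B Mod N"
  have gQ: "group Q" unfolding Q_def by (rule normal.factorgroup_is_group[OF Nn])
  define pr where "pr = (\<lambda>x. N #>\<^bsub>B\<^esub> x)"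
  have prh: "pr \<in> hom B Q" unfolding pr_def Q_def by (rule normal.r_coset_hom_Mod[OF Nn])
  interpret pr: group_hom B Q pr using prh gQ by (simp add: group_hom_def group_hom_axioms_def B.is_group)
  have triv: "\<And>n. n \<in> lower_central B (2*k-1) \<Longrightarrow> pr n = \<one>\<^bsub>Q\<^esub>"
  proof -
    fix n assume "n \<in> lower_central B (2*k-1)"
    then have n: "n \<in> N" unfolding N_def .
    have "N #>\<^bsub>B\<^esub> n = N" using subgroup.rcos_const[OF normal_imp_subgroup[OF Nn] B.is_group n] .
    then show "pr n = \<one>\<^bsub>Q\<^esub>" unfolding pr_def Q_def by simp
  qed
  have cw: "cocyc (MQ Q) Q (wQ Q)" by (rule cocyc_MQ[OF gQ])
  interpret cw: cocyc "MQ Q" Q "wQ Q" by (rule cw)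
  have sym: "\<And>a b. a \<in> Bk \<Longrightarrow> b \<in> Bk \<Longrightarrow> wQ Q (pr a) (pr b) = wQ Q (pr b) (pr a) \<and> pr a \<otimes>\<^bsub>Q\<^esub> pr b = pr b \<otimes>\<^bsub>Q\<^esub> pr a"
    unfolding Bk_def using key_sym[OF cw assms(1) prh assms(2) triv] by blast
  have main: "boundary2 Q (push2 pr z)" if cyc: "cycle2 (B\<lparr>carrier := Bk\<rparr>) z" for z
  proof -
    define G where "G = B\<lparr>carrier := Bk\<rparr>"
    have ch: "chain2 G z" and d0: "\<And>x. bar_d2 G z x = 0" using cyc unfolding cycle2_def G_def by auto
    define S where "S = {p. z p \<noteq> 0}"
    have fS: "finite S" using ch unfolding chain2_def S_def by simp
    have SB: "\<And>p. p \<in> S \<Longrightarrow> fst p \<in> Bk \<and> snd p \<in> Bk" using ch unfolding chain2_def S_def G_def by auto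
    have Bks: "subgroup Bk B" unfolding Bk_def by (rule B.lc_subgroup)
    define A where "A = pr ` Bk"
    have As: "subgroup A Q" unfolding A_def by (rule pr.subgroup_img_is_subgroup[OF Bks])
    define QA where "QA = Q\<lparr>carrier := A\<rparr>"
    have cA: "cocyc (MQ Q) QA (wQ Q)" unfolding QA_def by (rule cocyc_restrict[OF cw As])
    define EA where "EA = ext (MQ Q) QA (wQ Q)"
    have cEA: "comm_group EA" unfolding EA_def
    proof (rule cocyc.ext_comm_group[OF cA])
      fix q q' assume "q \<in> carrier QA" "q' \<in> carrier QA"
      then obtain a b where ab: "a \<in> Bk" "b \<in> Bk" "q = pr a" "q' = pr b" unfolding QA_def A_def by auto
      show "q \<otimes>\<^bsub>QA\<^esub> q' = q' \<otimes>\<^bsub>QA\<^esub> q" using sym[OF ab(1,2)] ab unfolding QA_def by simp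
    next
      fix q q' assume "q \<in> carrier QA" "q' \<in> carrier QA"
      then obtain a b where ab: "a \<in> Bk" "b \<in> Bk" "q = pr a" "q' = pr b" unfolding QA_def A_def by auto
      show "wQ Q q q' = wQ Q q' q" using sym[OF ab(1,2)] ab by simp
    qed
    interpret EA: comm_group EA by (rule cEA)
    define Psi where "Psi = (\<lambda>x. (\<one>\<^bsub>MQ Q\<^esub>, pr x))"
    define XX where "XX = fst ` S \<union> snd ` S \<union> (\<lambda>p. fst p \<otimes>\<^bsub>B\<^esub> snd p) ` S"
    have fX: "finite XX" unfolding XX_def using fS by simp
    have XB: "XX \<subseteq> Bk"
    proof
      fix x assume "x \<in> XX"
      then show "x \<in> Bk" unfolding XX_def using SB subgroup.m_closed[OF Bks] by blast
    qed
    have Psic: "Psi \<in> XX \<rightarrow> carrier EA"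
      unfolding Psi_def EA_def QA_def A_def using XB cw.M.one_closed by auto
    have abd: "\<And>p. p \<in> S \<Longrightarrow> snd p \<in> XX \<and> fst p \<otimes>\<^bsub>B\<^esub> snd p \<in> XX \<and> fst p \<in> XX"
      unfolding XX_def by auto
    have fp: "finprod EA (\<lambda>x. Psi x [^]\<^bsub>EA\<^esub> (\<Sum>p\<in>S. z p * (of_bool (x = snd p) - of_bool (x = fst p \<otimes>\<^bsub>B\<^esub> snd p) + of_bool (x = fst p)))) XX
         = finprod EA (\<lambda>p. (Psi (snd p) \<otimes>\<^bsub>EA\<^esub> inv\<^bsub>EA\<^esub> (Psi (fst p \<otimes>\<^bsub>B\<^esub> snd p)) \<otimes>\<^bsub>EA\<^esub> Psi (fst p)) [^]\<^bsub>EA\<^esub> z p) S"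
      by (rule EA.fp_sum[OF fS fX Psic abd])
    have lhs: "finprod EA (\<lambda>x. Psi x [^]\<^bsub>EA\<^esub> (\<Sum>p\<in>S. z p * (of_bool (x = snd p) - of_bool (x = fst p \<otimes>\<^bsub>B\<^esub> snd p) + of_bool (x = fst p)))) XX = \<one>\<^bsub>EA\<^esub>"
    proof (rule EA.finprod_one_eqI)
      fix x assume "x \<in> XX"
      have "(\<Sum>p\<in>S. z p * (of_bool (x = snd p) - of_bool (x = fst p \<otimes>\<^bsub>B\<^esub> snd p) + of_bool (x = fst p))) = bar_d2 G z x"
        unfolding bar_d2_alt S_def G_def by simp
      then show "Psi x [^]\<^bsub>EA\<^esub> (\<Sum>p\<in>S. z p * (of_bool (x = snd p) - of_bool (x = fst p \<otimes>\<^bsub>B\<^esub> snd p) + of_bool (x = fst p))) = \<one>\<^bsub>EA\<^esub>"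
        using d0 by simp
    qed
    define iota where "iota = (\<lambda>m::('a set \<times> 'a set \<Rightarrow> int) set. (m, \<one>\<^bsub>Q\<^esub>))"
    have one_A: "\<one>\<^bsub>Q\<^esub> \<in> A" using subgroup.one_closed[OF As] .
    have iotah: "iota \<in> hom (MQ Q) EA"
    proof (rule homI)
      fix m assume "m \<in> carrier (MQ Q)"
      then show "iota m \<in> carrier EA" unfolding iota_def EA_def QA_def using one_A by simp
    next
      fix m m' assume "m \<in> carrier (MQ Q)" "m' \<in> carrier (MQ Q)"
      then show "iota (m \<otimes>\<^bsub>MQ Q\<^esub> m') = iota m \<otimes>\<^bsub>EA\<^esub> iota m'"
        unfolding iota_def EA_def QA_def by simp
    qed
    have iotag: "group_hom (MQ Q) EA iota"
      using iotah cw.M.is_group EA.is_group by (simp add: group_hom_def group_hom_axioms_def)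
    define W where "W = (\<lambda>p. wQ Q (pr (fst p)) (pr (snd p)))"
    have Wc: "\<And>p. p \<in> S \<Longrightarrow> W p \<in> carrier (MQ Q)"
    proof -
      fix p assume p: "p \<in> S"
      have "fst p \<in> carrier B" "snd p \<in> carrier B" using SB[OF p] subgroup.subset[OF Bks] by auto
      then show "W p \<in> carrier (MQ Q)" unfolding W_def by simp
    qed
    have tm: "Psi (snd p) \<otimes>\<^bsub>EA\<^esub> inv\<^bsub>EA\<^esub> (Psi (fst p \<otimes>\<^bsub>B\<^esub> snd p)) \<otimes>\<^bsub>EA\<^esub> Psi (fst p) = iota (W p)"
      if p: "p \<in> S" for p
    proof -
      have g: "fst p \<in> carrier B" and h: "snd p \<in> carrier B" using SB[OF p] subgroup.subset[OF Bks] by auto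
      have gh: "fst p \<otimes>\<^bsub>B\<^esub> snd p \<in> XX" using abd[OF p] by blast
      have cg: "Psi (fst p) \<in> carrier EA" "Psi (snd p) \<in> carrier EA" "Psi (fst p \<otimes>\<^bsub>B\<^esub> snd p) \<in> carrier EA"
        using Psic abd[OF p] by auto
      have ci: "iota (W p) \<in> carrier EA" using hom_in_carrier[OF iotah Wc[OF p]] .
      have e1: "Psi (fst p) \<otimes>\<^bsub>EA\<^esub> Psi (snd p) = iota (W p) \<otimes>\<^bsub>EA\<^esub> Psi (fst p \<otimes>\<^bsub>B\<^esub> snd p)"
        unfolding Psi_def iota_def EA_def QA_def W_def using g h by simp
      have "Psi (snd p) \<otimes>\<^bsub>EA\<^esub> inv\<^bsub>EA\<^esub> (Psi (fst p \<otimes>\<^bsub>B\<^esub> snd p)) \<otimes>\<^bsub>EA\<^esub> Psi (fst p)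
          = (Psi (fst p) \<otimes>\<^bsub>EA\<^esub> Psi (snd p)) \<otimes>\<^bsub>EA\<^esub> inv\<^bsub>EA\<^esub> (Psi (fst p \<otimes>\<^bsub>B\<^esub> snd p))"
        using cg by (simp add: EA.m_ac)
      also have "\<dots> = iota (W p)" unfolding e1 using cg ci by (simp add: EA.m_assoc)
      finally show ?thesis .
    qed
    have "finprod EA (\<lambda>p. (Psi (snd p) \<otimes>\<^bsub>EA\<^esub> inv\<^bsub>EA\<^esub> (Psi (fst p \<otimes>\<^bsub>B\<^esub> snd p)) \<otimes>\<^bsub>EA\<^esub> Psi (fst p)) [^]\<^bsub>EA\<^esub> z p) S
        = finprod EA (\<lambda>p. iota (W p) [^]\<^bsub>EA\<^esub> z p) S"
    proof (rule EA.finprod_cong'[OF refl])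
      show "(\<lambda>p. iota (W p) [^]\<^bsub>EA\<^esub> z p) \<in> S \<rightarrow> carrier EA"
        using hom_in_carrier[OF iotah Wc] by auto
    next
      fix p assume "p \<in> S"
      then show "(Psi (snd p) \<otimes>\<^bsub>EA\<^esub> inv\<^bsub>EA\<^esub> (Psi (fst p \<otimes>\<^bsub>B\<^esub> snd p)) \<otimes>\<^bsub>EA\<^esub> Psi (fst p)) [^]\<^bsub>EA\<^esub> z p
          = iota (W p) [^]\<^bsub>EA\<^esub> z p" using tm by simp
    qed
    then have one1: "\<one>\<^bsub>EA\<^esub> = finprod EA (\<lambda>p. iota (W p) [^]\<^bsub>EA\<^esub> z p) S"
      using lhs fp by simp
    have Wp: "(\<lambda>p. W p [^]\<^bsub>MQ Q\<^esub> z p) \<in> S \<rightarrow> carrier (MQ Q)"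
      using Wc by auto
    have "finprod EA (\<lambda>p. iota (W p) [^]\<^bsub>EA\<^esub> z p) S = finprod EA (\<lambda>p. iota (W p [^]\<^bsub>MQ Q\<^esub> z p)) S"
    proof (rule EA.finprod_cong'[OF refl])
      show "(\<lambda>p. iota (W p [^]\<^bsub>MQ Q\<^esub> z p)) \<in> S \<rightarrow> carrier EA"
        using hom_in_carrier[OF iotah] Wp by auto
    next
      fix p assume "p \<in> S"
      then show "iota (W p) [^]\<^bsub>EA\<^esub> z p = iota (W p [^]\<^bsub>MQ Q\<^esub> z p)"
        using group_hom.hom_int_pow[OF iotag Wc] by simp
    qed
    also have "\<dots> = iota (finprod (MQ Q) (\<lambda>p. W p [^]\<^bsub>MQ Q\<^esub> z p) S)"
      by (rule hom_finprod_cg[OF MQ_comm_group cEA iotah fS Wp, symmetric])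
    finally have "iota (finprod (MQ Q) (\<lambda>p. W p [^]\<^bsub>MQ Q\<^esub> z p) S) = \<one>\<^bsub>EA\<^esub>" using one1 by simp
    then have P1: "finprod (MQ Q) (\<lambda>p. W p [^]\<^bsub>MQ Q\<^esub> z p) S = \<one>\<^bsub>MQ Q\<^esub>"
      unfolding iota_def EA_def by simp
    define D where "D = (\<lambda>p. DQ Q (pr (fst p)) (pr (snd p)))"
    have Dc: "\<And>p. p \<in> S \<Longrightarrow> D p \<in> carrier (CG Q)"
    proof -
      fix p assume p: "p \<in> S"
      have "fst p \<in> carrier B" "snd p \<in> carrier B" using SB[OF p] subgroup.subset[OF Bks] by auto
      then show "D p \<in> carrier (CG Q)" unfolding D_def by (intro DQ_chain[OF gQ]) simp_all
    qed
    define V where "V = (\<lambda>p. (\<lambda>y. z p * D p y))"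
    have Vc: "V \<in> S \<rightarrow> carrier (CG Q)" unfolding V_def using Dc by (auto intro: chain2_smult)
    define kap where "kap = (\<lambda>a. UB Q #>\<^bsub>CG Q\<^esub> a)"
    have kaph: "kap \<in> hom (CG Q) (MQ Q)" unfolding kap_def MQ_def by (rule normal.r_coset_hom_Mod[OF UB_normal])
    have WV: "\<And>p. p \<in> S \<Longrightarrow> W p [^]\<^bsub>MQ Q\<^esub> z p = kap (V p)"
    proof -
      fix p assume p: "p \<in> S"
      have "W p [^]\<^bsub>MQ Q\<^esub> z p = UB Q #>\<^bsub>CG Q\<^esub> (D p [^]\<^bsub>CG Q\<^esub> z p)"
        unfolding W_def wQ_def MQ_def D_def using normal.FactGroup_int_pow[OF UB_normal Dc[OF p, unfolded D_def]] by simp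
      also have "\<dots> = kap (V p)" unfolding kap_def V_def using CG_pow[OF Dc[OF p]] by simp
      finally show "W p [^]\<^bsub>MQ Q\<^esub> z p = kap (V p)" .
    qed
    have "finprod (MQ Q) (\<lambda>p. W p [^]\<^bsub>MQ Q\<^esub> z p) S = finprod (MQ Q) (\<lambda>p. kap (V p)) S"
    proof (rule comm_monoid.finprod_cong'[OF comm_group.axioms(1)[OF MQ_comm_group] refl])
      show "(\<lambda>p. kap (V p)) \<in> S \<rightarrow> carrier (MQ Q)" using hom_in_carrier[OF kaph] Vc by auto
    next
      fix p assume "p \<in> S" then show "W p [^]\<^bsub>MQ Q\<^esub> z p = kap (V p)" by (rule WV)
    qed
    also have "\<dots> = kap (finprod (CG Q) V S)"
      by (rule hom_finprod_cg[OF CG_comm_group MQ_comm_group kaph fS Vc, symmetric])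
    also have "finprod (CG Q) V S = (\<lambda>y. \<Sum>p\<in>S. V p y)" by (rule CG_finprod[OF fS Vc])
    finally have "kap (\<lambda>y. \<Sum>p\<in>S. V p y) = \<one>\<^bsub>MQ Q\<^esub>" using P1 by simp
    then have "kap (\<lambda>y. \<Sum>p\<in>S. V p y) = UB Q" unfolding MQ_one .
    moreover have Sc: "(\<lambda>y. \<Sum>p\<in>S. V p y) \<in> carrier (CG Q)"
      using comm_monoid.finprod_closed[OF comm_group.axioms(1)[OF CG_comm_group] Vc] CG_finprod[OF fS Vc] by simp
    ultimately have "(\<lambda>y. \<Sum>p\<in>S. V p y) \<in> UB Q" unfolding kap_def using rcos_one_iff by blast
    then have bd: "boundary2 Q (\<lambda>y. \<Sum>p\<in>S. V p y)" unfolding UB_def by simp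
    have sz: "(\<Sum>p\<in>S. z p) = 0" unfolding S_def by (rule cycle_sum_zero[OF ch d0])
    have "(\<lambda>y. \<Sum>p\<in>S. V p y) = push2 pr z"
    proof
      fix y
      have "(\<Sum>p\<in>S. V p y) = (\<Sum>p\<in>S. z p * dlt (pr (fst p), pr (snd p)) y) - (\<Sum>p\<in>S. z p) * dlt (\<one>\<^bsub>Q\<^esub>, \<one>\<^bsub>Q\<^esub>) y"
        unfolding V_def D_def DQ_def by (simp add: right_diff_distrib sum_subtractf sum_distrib_right)
      also have "\<dots> = push2 pr z y" using push2_alt[OF fS[unfolded S_def], of pr y] sz unfolding S_def by simp
      finally show "(\<Sum>p\<in>S. V p y) = push2 pr z y" .
    qed
    then show ?thesis using bd by simp
  qed
  show ?thesis unfolding H2_map_zero_def using main unfolding Q_def pr_def N_def Bk_def by (simp add: comp_def)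
qed


end
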